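(* Assume there exists a $1$-perfect code in $H(q+1,q)$. Let $f$ be a $(b,c)$-coloring of $H(n,q)$ with main eigenvalue $\lambda$ such that the set of vertices of color $1$ can be partitioned into $k$-faces, and suppose $\lambda\le k(q-1)$. Then for every positive integer $r$ and all $t_1,\dots,t_r\in\{1,\dots,q\}$ there is a $\big(q^r(b+c)-t_1\cdots t_r c,\ t_1\cdots t_r c\big)$-coloring of $H\big(q^r n+(k(q-1)-\lambda)\frac{q^r-1}{q-1},\,q\big)$ with main eigenvalue $\lambda+k(q-1)(q^r-1)$.
   Context: The Hamming graph $H(n,q)$ has vertex set $\mathbb{Z}_q^n$, two vertices adjacent iff they differ in exactly one coordinate. A $k$-face is a set of vertices obtained by fixing $n-k$ coordinates and letting the other $k$ coordinates range over $\mathbb{Z}_q$. A $(b,c)$-coloring of $H(n,q)$ is a surjective map onto $\{1,2\}$ in which each color-1 vertex has exactly $b$ neighbours of color 2 and each color-2 vertex has exactly $c$ neighbours of color 1; its main eigenvalue is $n(q-1)-(b+c)$. A $1$-perfect code in $H(n,q)$ is a set $C$ of vertices such that every radius-$1$ Hamming ball contains exactly one element of $C$. *)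

theory Defs
  imports Main
begin

text \<open>Vertices of H(n,q): words of length n over {0..q-1}, encoded as functions
  nat => nat that vanish outside {0..<n}.\<close>
definition hamming_verts :: "nat \<Rightarrow> nat \<Rightarrow> (nat \<Rightarrow> nat) set" where
  "hamming_verts n q = {x. (\<forall>i<n. x i < q) \<and> (\<forall>i\<ge>n. x i = 0)}"

definition hamming_dist :: "nat \<Rightarrow> (nat \<Rightarrow> nat) \<Rightarrow> (nat \<Rightarrow> nat) \<Rightarrow> nat" where
  "hamming_dist n x y = card {i. i < n \<and> x i \<noteq> y i}"

definition hamming_adj :: "nat \<Rightarrow> (nat \<Rightarrow> nat) \<Rightarrow> (nat \<Rightarrow> nat) \<Rightarrow> bool" where
  "hamming_adj n x y \<longleftrightarrow> hamming_dist n x y = 1"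

definition is_face :: "nat \<Rightarrow> nat \<Rightarrow> nat \<Rightarrow> (nat \<Rightarrow> nat) set \<Rightarrow> bool" where
  "is_face n q k F \<longleftrightarrow> (\<exists>K a. K \<subseteq> {..<n} \<and> card K = k \<and> (\<forall>i\<in>{..<n} - K. a i < q) \<and>
      F = {x \<in> hamming_verts n q. \<forall>i\<in>{..<n} - K. x i = a i})"

definition is_coloring :: "nat \<Rightarrow> nat \<Rightarrow> nat \<Rightarrow> nat \<Rightarrow> ((nat \<Rightarrow> nat) \<Rightarrow> nat) \<Rightarrow> bool" where
  "is_coloring n q b c f \<longleftrightarrow>
     f ` hamming_verts n q = {1, 2} \<and>
     (\<forall>x\<in>hamming_verts n q. f x = 1 \<longrightarrow>
        card {y \<in> hamming_verts n q. hamming_adj n x y \<and> f y = 2} = b) \<and>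
     (\<forall>x\<in>hamming_verts n q. f x = 2 \<longrightarrow>
        card {y \<in> hamming_verts n q. hamming_adj n x y \<and> f y = 1} = c)"

definition main_eigenvalue :: "nat \<Rightarrow> nat \<Rightarrow> nat \<Rightarrow> nat \<Rightarrow> int" where
  "main_eigenvalue n q b c = int n * (int q - 1) - (int b + int c)"

definition perfect_code_1 :: "nat \<Rightarrow> nat \<Rightarrow> (nat \<Rightarrow> nat) set \<Rightarrow> bool" where
  "perfect_code_1 n q C \<longleftrightarrow> C \<subseteq> hamming_verts n q \<and>
     (\<forall>x\<in>hamming_verts n q. card {z \<in> C. hamming_dist n x z \<le> 1} = 1)"

end

theory Submission imports Defs begin

abbreviation "V \<equiv> hamming_verts"

lemma finite_verts: "finite (hamming_verts n q)"
proof -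
  have "hamming_verts n q \<subseteq> (\<lambda>xs i. if i < n then xs ! i else 0) ` {xs. set xs \<subseteq> {..<q} \<and> length xs = n}"
  proof
    fix x assume x: "x \<in> hamming_verts n q"
    show "x \<in> (\<lambda>xs i. if i < n then xs ! i else 0) ` {xs. set xs \<subseteq> {..<q} \<and> length xs = n}"
    proof
      show "x = (\<lambda>i. if i < n then map x [0..<n] ! i else 0)"
        using x by (auto simp: hamming_verts_def)
      show "map x [0..<n] \<in> {xs. set xs \<subseteq> {..<q} \<and> length xs = n}"
        using x by (auto simp: hamming_verts_def)
    qed
  qed
  moreover have "finite {xs. set xs \<subseteq> {..<q} \<and> length xs = n}"
    by (rule finite_lists_length_eq) simp
  ultimately show ?thesis by (rule finite_subset[OF _ finite_imageI])
qed

lemma upd_in_verts: "x \<in> V n q \<Longrightarrow> i < n \<Longrightarrow> v < q \<Longrightarrow> x(i := v) \<in> V n q"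
  by (auto simp: hamming_verts_def)

lemma nbr_count:
  assumes x: "x \<in> hamming_verts n q"
  shows "card {y \<in> hamming_verts n q. hamming_adj n x y \<and> P y} =
         (\<Sum>i<n. card {v. v < q \<and> v \<noteq> x i \<and> P (x(i := v))})"
proof -
  let ?S = "SIGMA i:{..<n}. {v. v < q \<and> v \<noteq> x i \<and> P (x(i := v))}"
  have eq: "{y \<in> hamming_verts n q. hamming_adj n x y \<and> P y} = (\<lambda>(i,v). x(i := v)) ` ?S"
  proof (rule set_eqI, rule iffI)
    fix y assume "y \<in> {y \<in> hamming_verts n q. hamming_adj n x y \<and> P y}"
    hence y: "y \<in> V n q" "card {i. i < n \<and> x i \<noteq> y i} = 1" "P y"
      by (auto simp: hamming_adj_def hamming_dist_def)
    then obtain i where i: "{i. i < n \<and> x i \<noteq> y i} = {i}" by (auto simp: card_Suc_eq)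
    have yeq: "y = x(i := y i)"
    proof
      fix j show "y j = (x(i := y i)) j"
      proof (cases "j = i")
        case False
        show ?thesis
        proof (cases "j < n")
          case True
          hence "j \<notin> {i. i < n \<and> x i \<noteq> y i}" using i False by simp
          thus ?thesis using True False by simp
        next
          case False thus ?thesis using x y(1) \<open>j \<noteq> i\<close> by (auto simp: hamming_verts_def)
        qed
      qed simp
    qed
    have "i < n" "x i \<noteq> y i" using i by auto
    moreover have "y i < q" using y(1) \<open>i < n\<close> by (auto simp: hamming_verts_def)
    ultimately have "(i, y i) \<in> ?S" using y(3) yeq by auto
    thus "y \<in> (\<lambda>(i,v). x(i := v)) ` ?S" using yeq by (auto intro!: image_eqI[of _ _ "(i, y i)"])
  next
    fix y assume "y \<in> (\<lambda>(i,v). x(i := v)) ` ?S"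
    then obtain i v where iv: "i < n" "v < q" "v \<noteq> x i" "P (x(i := v))" "y = x(i := v)" by auto
    have "{j. j < n \<and> x j \<noteq> y j} = {i}" using iv by auto
    thus "y \<in> {y \<in> hamming_verts n q. hamming_adj n x y \<and> P y}"
      using iv x by (auto simp: hamming_adj_def hamming_dist_def upd_in_verts)
  qed
  have inj: "inj_on (\<lambda>(i,v). x(i := v)) ?S"
  proof (rule inj_onI, clarify)
    fix i v i' v'
    assume a: "i < n" "v \<noteq> x i" "i' < n" "v' \<noteq> x i'" "x(i := v) = x(i' := v')"
    show "i = i' \<and> v = v'"
    proof (cases "i = i'")
      case True thus ?thesis using a(5) by (metis fun_upd_same)
    next
      case False
      hence "(x(i := v)) i = (x(i' := v')) i" using a(5) by simp
      thus ?thesis using False a(2) by simp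
    qed
  qed
  have "card {y \<in> hamming_verts n q. hamming_adj n x y \<and> P y} = card ?S"
    unfolding eq by (rule card_image[OF inj])
  also have "\<dots> = (\<Sum>i<n. card {v. v < q \<and> v \<noteq> x i \<and> P (x(i := v))})"
    by (rule card_SigmaI) auto
  finally show ?thesis .
qed

lemma card_others: "a < q \<Longrightarrow> card {v. v < q \<and> v \<noteq> a} = q - 1"
proof -
  assume "a < q"
  have "{v. v < q \<and> v \<noteq> a} = {..<q} - {a}" by auto
  thus ?thesis using \<open>a < q\<close> by simp
qed

lemma nbr_total:
  assumes x: "x \<in> hamming_verts n q"
  shows "card {y \<in> hamming_verts n q. hamming_adj n x y} = n * (q - 1)"
proof -
  have "card {y \<in> hamming_verts n q. hamming_adj n x y \<and> True} = (\<Sum>i<n. card {v. v < q \<and> v \<noteq> x i \<and> True})"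
    by (rule nbr_count[OF x])
  also have "\<dots> = (\<Sum>i<n. q - 1)"
    using x by (intro sum.cong refl) (simp add: card_others hamming_verts_def)
  finally show ?thesis by simp
qed

lemma sum_indicator: "finite A \<Longrightarrow> (\<Sum>a\<in>A. if P a then (1::'b::comm_semiring_1) else 0) = of_nat (card {a\<in>A. P a})"
  by (simp add: sum.inter_filter[symmetric])

lemma mod_count:
  fixes q A :: nat
  assumes "0 < q"
  shows "card {s. s < q \<and> P ((s + A) mod q)} = card {u. u < q \<and> P u}"
proof -
  have inj: "inj_on (\<lambda>s. (s + A) mod q) {..<q}"
  proof (rule inj_onI)
    fix s1 s2 assume "s1 \<in> {..<q}" "s2 \<in> {..<q}" "(s1 + A) mod q = (s2 + A) mod q"
    hence h: "s1 < q" "s2 < q" "(s1 + A) mod q = (s2 + A) mod q" by auto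
    show "s1 = s2"
    proof (cases "s2 \<le> s1")
      case True
      hence "q dvd (s1 + A) - (s2 + A)" using h(3) mod_eq_dvd_iff_nat[of "s2 + A" "s1 + A" q] by simp
      hence "q dvd s1 - s2" by simp
      moreover have "s1 - s2 < q" using h by simp
      ultimately have "s1 - s2 = 0" using nat_dvd_not_less by blast
      thus ?thesis using True by simp
    next
      case False
      hence "q dvd (s2 + A) - (s1 + A)" using h(3) mod_eq_dvd_iff_nat[of "s1 + A" "s2 + A" q] by simp
      hence "q dvd s2 - s1" by simp
      moreover have "s2 - s1 < q" using h by simp
      ultimately have "s2 - s1 = 0" using nat_dvd_not_less by blast
      thus ?thesis using False by simp
    qed
  qed
  have img: "(\<lambda>s. (s + A) mod q) ` {..<q} = {..<q}"
  proof (rule card_subset_eq)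
    show "finite {..<q}" by simp
    show "(\<lambda>s. (s + A) mod q) ` {..<q} \<subseteq> {..<q}" using assms by auto
    show "card ((\<lambda>s. (s + A) mod q) ` {..<q}) = card {..<q}" using card_image[OF inj] .
  qed
  have "card {s. s < q \<and> P ((s + A) mod q)} = card ((\<lambda>s. (s + A) mod q) ` {s. s < q \<and> P ((s + A) mod q)})"
    by (rule card_image[symmetric], rule inj_on_subset[OF inj]) auto
  also have "(\<lambda>s. (s + A) mod q) ` {s. s < q \<and> P ((s + A) mod q)} = {u. u < q \<and> P u}"
  proof (rule set_eqI, rule iffI)
    fix u assume "u \<in> {u. u < q \<and> P u}"
    hence "u \<in> (\<lambda>s. (s + A) mod q) ` {..<q}" "P u" using img by auto
    then obtain s where "s < q" "u = (s + A) mod q" by auto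
    thus "u \<in> (\<lambda>s. (s + A) mod q) ` {s. s < q \<and> P ((s + A) mod q)}" using \<open>P u\<close> by auto
  next
    fix u assume "u \<in> (\<lambda>s. (s + A) mod q) ` {s. s < q \<and> P ((s + A) mod q)}"
    thus "u \<in> {u. u < q \<and> P u}" using assms by auto
  qed
  finally show ?thesis .
qed

lemma mod_count_t:
  fixes q A t :: nat
  assumes "0 < q" "t \<le> q"
  shows "card {s. s < q \<and> (s + A) mod q < t} = t"
proof -
  have "{u. u < q \<and> u < t} = {..<t}" using assms by auto
  thus ?thesis using mod_count[OF assms(1), of "\<lambda>u. u < t" A] by simp
qed

lemma mod_close_eq:
  fixes x1 x2 q :: nat
  assumes "x1 < x2 + q" "x2 < x1 + q" "x1 mod q = x2 mod q"
  shows "x1 = x2"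
proof (cases "x2 \<le> x1")
  case True
  hence "q dvd x1 - x2" using assms(3) mod_eq_dvd_iff_nat[of x2 x1 q] by simp
  moreover have "x1 - x2 < q" using assms by simp
  ultimately have "x1 - x2 = 0" using nat_dvd_not_less by blast
  thus ?thesis using True by simp
next
  case False
  hence "q dvd x2 - x1" using assms(3) mod_eq_dvd_iff_nat[of x1 x2 q] by simp
  moreover have "x2 - x1 < q" using assms by simp
  ultimately have "x2 - x1 = 0" using nat_dvd_not_less by blast
  thus ?thesis using False by simp
qed

lemma image_filter: "h ` A = B \<Longrightarrow> h ` {p \<in> A. Q (h p)} = {z \<in> B. Q z}"
  by auto

locale pcode =
  fixes C :: "(nat \<Rightarrow> nat) set" and q :: nat
  assumes code: "perfect_code_1 (q + 1) q C" and q2: "2 \<le> q"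
begin

lemma C_sub: "C \<subseteq> V (q + 1) q"
  using code by (simp add: perfect_code_1_def)

lemma finC: "finite C"
  using C_sub finite_verts finite_subset by blast

lemma code_card: "x \<in> V (q + 1) q \<Longrightarrow> card {z \<in> C. hamming_dist (q + 1) x z \<le> 1} = 1"
  using code by (simp add: perfect_code_1_def)

lemma code_far:
  assumes c1: "c1 \<in> C" and c2: "c2 \<in> C" and D: "{i. i < q + 1 \<and> c1 i \<noteq> c2 i} \<subseteq> {a, b}"
  shows "c1 = c2"
proof (rule ccontr)
  assume ne: "c1 \<noteq> c2"
  have c1V: "c1 \<in> V (q + 1) q" and c2V: "c2 \<in> V (q + 1) q" using c1 c2 C_sub by auto
  have "\<exists>i0. i0 < q + 1 \<and> c1 i0 \<noteq> c2 i0"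
  proof (rule ccontr)
    assume nex: "\<not> (\<exists>i0. i0 < q + 1 \<and> c1 i0 \<noteq> c2 i0)"
    have "c1 i = c2 i" for i
    proof (cases "i < q + 1")
      case True thus ?thesis using nex by blast
    next
      case False thus ?thesis using c1V c2V by (simp add: hamming_verts_def)
    qed
    hence "\<forall>i. c1 i = c2 i" by blast
    thus False using ne by auto
  qed
  then obtain i0 where i0: "i0 < q + 1" "c1 i0 \<noteq> c2 i0" by blast
  have i0ab: "i0 \<in> {a, b}" using D i0 by blast
  define x where "x = c1(i0 := c2 i0)"
  have c2i0: "c2 i0 < q" using c2V i0(1) by (simp add: hamming_verts_def)
  have xV: "x \<in> V (q + 1) q" unfolding x_def using upd_in_verts[OF c1V i0(1) c2i0] .
  have "{i. i < q + 1 \<and> x i \<noteq> c1 i} = {i0}" using i0 by (auto simp: x_def)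
  hence d1: "hamming_dist (q + 1) x c1 \<le> 1" by (simp add: hamming_dist_def)
  have sub: "{i. i < q + 1 \<and> x i \<noteq> c2 i} \<subseteq> {a, b} - {i0}" using D by (auto simp: x_def)
  have "card {a, b} \<le> 2" by (simp add: card_insert_if)
  hence "card ({a, b} - {i0}) \<le> 1" using card_Diff_singleton[OF i0ab] by simp
  hence d2: "hamming_dist (q + 1) x c2 \<le> 1"
    unfolding hamming_dist_def using card_mono[OF _ sub] by (meson finite.emptyI finite.insertI finite_Diff le_trans)
  have "{c1, c2} \<subseteq> {z \<in> C. hamming_dist (q + 1) x z \<le> 1}" using d1 d2 c1 c2 by auto
  hence "card {c1, c2} \<le> card {z \<in> C. hamming_dist (q + 1) x z \<le> 1}"
    by (rule card_mono[rotated]) (simp add: finC)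
  thus False using ne code_card[OF xV] by simp
qed

lemma prefix_exists:
  assumes u: "\<forall>i<q - 1. u i < q"
  shows "\<exists>c\<in>C. \<forall>i<q - 1. c i = u i"
proof (rule ccontr)
  assume no: "\<not> ?thesis"
  define w where "w b = (\<lambda>i. if i < q - 1 then u i else if i = q then b else 0)" for b
  have wV: "w b \<in> V (q + 1) q" if "b < q" for b
    using u that q2 by (auto simp: w_def hamming_verts_def)
  have "\<forall>b. \<exists>c. b < q \<longrightarrow> c \<in> C \<and> hamming_dist (q + 1) (w b) c \<le> 1"
  proof (intro allI)
    fix b
    show "\<exists>c. b < q \<longrightarrow> c \<in> C \<and> hamming_dist (q + 1) (w b) c \<le> 1"
    proof (cases "b < q")
      case True
      have "card {z \<in> C. hamming_dist (q + 1) (w b) z \<le> 1} = 1" using code_card[OF wV[OF True]] .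
      hence "{z \<in> C. hamming_dist (q + 1) (w b) z \<le> 1} \<noteq> {}" by (metis card.empty zero_neq_one)
      thus ?thesis by auto
    qed simp
  qed
  then obtain cw where cw: "\<And>b. b < q \<Longrightarrow> cw b \<in> C \<and> hamming_dist (q + 1) (w b) (cw b) \<le> 1"
    by metis
  have "\<forall>b. \<exists>i. b < q \<longrightarrow> i < q - 1 \<and> w b i \<noteq> cw b i"
  proof (intro allI)
    fix b
    show "\<exists>i. b < q \<longrightarrow> i < q - 1 \<and> w b i \<noteq> cw b i"
    proof (cases "b < q")
      case True
      show ?thesis
      proof (rule ccontr)
        assume "\<not> ?thesis"
        hence "\<forall>i<q - 1. cw b i = u i" using True by (auto simp: w_def)
        thus False using no cw[OF True] by blast
      qed
    qed simp
  qed
  then obtain ib where ib: "\<And>b. b < q \<Longrightarrow> ib b < q - 1 \<and> w b (ib b) \<noteq> cw b (ib b)"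
    by metis
  have single: "j = ib b" if "b < q" "j < q + 1" "w b j \<noteq> cw b j" for b j
  proof -
    let ?D = "{i. i < q + 1 \<and> w b i \<noteq> cw b i}"
    have "finite ?D" by simp
    moreover have "card ?D \<le> Suc 0" using cw[OF that(1)] by (simp add: hamming_dist_def)
    ultimately have "\<forall>a1\<in>?D. \<forall>a2\<in>?D. a1 = a2" using card_le_Suc0_iff_eq by blast
    moreover have "ib b \<in> ?D" using ib[OF that(1)] by auto
    moreover have "j \<in> ?D" using that by auto
    ultimately show ?thesis by blast
  qed
  have inj: "inj_on ib {..<q}"
  proof (rule inj_onI)
    fix b1 b2 assume b: "b1 \<in> {..<q}" "b2 \<in> {..<q}" "ib b1 = ib b2"
    have "{j. j < q + 1 \<and> cw b1 j \<noteq> cw b2 j} \<subseteq> {ib b1, q}"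
    proof
      fix j assume j: "j \<in> {j. j < q + 1 \<and> cw b1 j \<noteq> cw b2 j}"
      show "j \<in> {ib b1, q}"
      proof (rule ccontr)
        assume nj: "j \<notin> {ib b1, q}"
        have "cw b1 j = w b1 j"
        proof (rule ccontr)
          assume "cw b1 j \<noteq> w b1 j"
          hence "j = ib b1" using single[of b1 j] b j by auto
          thus False using nj by simp
        qed
        also have "\<dots> = w b2 j" using nj by (simp add: w_def)
        also have "\<dots> = cw b2 j"
        proof (rule ccontr)
          assume "w b2 j \<noteq> cw b2 j"
          hence "j = ib b2" using single[of b2 j] b j by auto
          thus False using nj b(3) by simp
        qed
        finally show False using j by simp
      qed
    qed
    hence eq: "cw b1 = cw b2" using code_far cw b by blast
    have "q \<noteq> ib b1" "q \<noteq> ib b2" using ib b by fastforce+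
    have "cw b1 q = w b1 q"
    proof (rule ccontr)
      assume "cw b1 q \<noteq> w b1 q"
      hence "q = ib b1" using single[of b1 q] b by auto
      thus False using \<open>q \<noteq> ib b1\<close> by simp
    qed
    moreover have "cw b2 q = w b2 q"
    proof (rule ccontr)
      assume "cw b2 q \<noteq> w b2 q"
      hence "q = ib b2" using single[of b2 q] b by auto
      thus False using \<open>q \<noteq> ib b2\<close> by simp
    qed
    ultimately have "cw b1 q = w b1 q" "cw b2 q = w b2 q" by auto
    moreover have "w b q = b" for b proof - have "\<not> q < q - 1" by arith thus ?thesis unfolding w_def by simp qed
    ultimately show "b1 = b2" using eq by metis
  qed
  have "ib ` {..<q} \<subseteq> {..<q - 1}" using ib by auto
  hence "card {..<q} \<le> card {..<q - 1}" using card_inj_on_le[OF inj] by blast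
  thus False using q2 by simp
qed

definition phi :: "(nat \<Rightarrow> nat) \<Rightarrow> (nat \<Rightarrow> nat)" where
  "phi u = (SOME c. c \<in> C \<and> (\<forall>i<q - 1. c i = u i))"

lemma phi: assumes "\<forall>i<q - 1. u i < q" shows "phi u \<in> C" "\<forall>i<q - 1. phi u i = u i"
proof -
  have "\<exists>c. c \<in> C \<and> (\<forall>i<q - 1. c i = u i)" using prefix_exists[OF assms] by blast
  hence "phi u \<in> C \<and> (\<forall>i<q - 1. phi u i = u i)" unfolding phi_def by (rule someI_ex)
  thus "phi u \<in> C" "\<forall>i<q - 1. phi u i = u i" by auto
qed

lemma phi_cong: "(\<forall>i<q - 1. u i = u' i) \<Longrightarrow> phi u = phi u'"
  unfolding phi_def by simp

lemma phiV: "\<forall>i<q - 1. u i < q \<Longrightarrow> phi u \<in> V (q + 1) q"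
  using phi(1) C_sub by blast

lemma phi_lt: "\<forall>i<q - 1. u i < q \<Longrightarrow> j < q + 1 \<Longrightarrow> phi u j < q"
  using phiV by (auto simp: hamming_verts_def)

lemma phi_ltV: "u \<in> V q q \<Longrightarrow> j < q + 1 \<Longrightarrow> phi u j < q"
  by (rule phi_lt) (auto simp: hamming_verts_def)

definition sB :: "(nat \<Rightarrow> nat) \<Rightarrow> nat" where
  "sB w = (w (q - 1) + q - phi w (q - 1)) mod q"

definition tB :: "(nat \<Rightarrow> nat) \<Rightarrow> nat" where
  "tB w = phi w q"

lemma sB_lt: "sB w < q"
  using q2 by (simp add: sB_def)

lemma wV_pre: "w \<in> V q q \<Longrightarrow> \<forall>i<q - 1. w i < q"
  by (auto simp: hamming_verts_def)

lemma tB_lt: "w \<in> V q q \<Longrightarrow> tB w < q"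
  unfolding tB_def by (rule phi_lt[OF wV_pre]) auto

end


context pcode begin

lemma phi_upd_last: "phi (w(q - 1 := v)) = phi w"
  by (rule phi_cong) simp

lemma sB_upd_last:
  assumes "w \<in> V q q"
  shows "sB (w(q - 1 := v)) = (v + q - phi w (q - 1)) mod q"
  unfolding sB_def phi_upd_last by simp

lemma phi_upd_pre:
  assumes w: "w \<in> V q q" and i: "i < q - 1" and v: "v < q" "v \<noteq> w i"
  shows "phi (w(i := v)) (q - 1) \<noteq> phi w (q - 1)" "phi (w(i := v)) q \<noteq> phi w q"
proof -
  have w': "w(i := v) \<in> V q q" using upd_in_verts[OF w _ v(1)] i by simp
  note P1 = phi[OF wV_pre[OF w']]
  note P0 = phi[OF wV_pre[OF w]]
  have ne: "phi (w(i := v)) \<noteq> phi w"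
  proof
    assume "phi (w(i := v)) = phi w"
    hence "phi (w(i := v)) i = phi w i" by simp
    moreover have "phi (w(i := v)) i = (w(i := v)) i" using P1(2) i by blast
    moreover have "phi w i = w i" using P0(2) i by blast
    ultimately have "(w(i := v)) i = w i" by simp
    thus False using v by simp
  qed
  have agree: "phi (w(i := v)) j = phi w j" if "j < q - 1" "j \<noteq> i" for j
  proof -
    have "phi (w(i := v)) j = (w(i := v)) j" using P1(2) that(1) by blast
    moreover have "phi w j = w j" using P0(2) that(1) by blast
    ultimately show ?thesis using that(2) by simp
  qed
  show "phi (w(i := v)) (q - 1) \<noteq> phi w (q - 1)"
  proof
    assume eq: "phi (w(i := v)) (q - 1) = phi w (q - 1)"
    have "{j. j < q + 1 \<and> phi (w(i := v)) j \<noteq> phi w j} \<subseteq> {i, q}"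
    proof
      fix j assume j: "j \<in> {j. j < q + 1 \<and> phi (w(i := v)) j \<noteq> phi w j}"
      show "j \<in> {i, q}"
      proof (rule ccontr)
        assume "j \<notin> {i, q}"
        moreover from this j have "j < q - 1 \<or> j = q - 1" by auto
        ultimately show False using j agree eq by auto
      qed
    qed
    thus False using code_far[OF P1(1) P0(1)] ne by blast
  qed
  show "phi (w(i := v)) q \<noteq> phi w q"
  proof
    assume eq: "phi (w(i := v)) q = phi w q"
    have "{j. j < q + 1 \<and> phi (w(i := v)) j \<noteq> phi w j} \<subseteq> {i, q - 1}"
    proof
      fix j assume j: "j \<in> {j. j < q + 1 \<and> phi (w(i := v)) j \<noteq> phi w j}"
      show "j \<in> {i, q - 1}"
      proof (rule ccontr)
        assume "j \<notin> {i, q - 1}"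
        moreover from this j have "j < q - 1 \<or> j = q" by auto
        ultimately show False using j agree eq by auto
      qed
    qed
    thus False using code_far[OF P1(1) P0(1)] ne by blast
  qed
qed

lemma sB_upd_last':
  assumes "w \<in> V q q"
  shows "sB (w(q - Suc 0 := v)) = (v + q - phi w (q - Suc 0)) mod q"
  using sB_upd_last[OF assms] by simp

lemma phi_upd_last': "phi (w(q - Suc 0 := v)) = phi w"
  using phi_upd_last by simp

lemma sB_pre:
  assumes w: "w \<in> V q q" and i: "i < q - 1"
  shows "sB (w(i := v)) = (w (q - 1) + q - phi (w(i := v)) (q - 1)) mod q"
  using i by (simp add: sB_def)

lemma modsub_inj:
  assumes "a1 < q" "a2 < q" "(W + q - a1) mod q = (W + q - a2) mod q"
  shows "a1 = a2"
proof -
  have "W + q - a1 = W + q - a2"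
    by (rule mod_close_eq[OF _ _ assms(3)]) (use assms in auto)
  thus ?thesis using assms by simp
qed

lemma block_bij:
  assumes w: "w \<in> V q q"
  shows "bij_betw (\<lambda>(i, v). (sB (w(i := v)), tB (w(i := v))))
           (SIGMA i:{..<q}. {v. v < q \<and> v \<noteq> w i}) ({a. a < q \<and> a \<noteq> sB w} \<times> {..<q})"
proof -
  let ?h = "\<lambda>(i, v). (sB (w(i := v)), tB (w(i := v)))"
  let ?A = "SIGMA i:{..<q}. {v. v < q \<and> v \<noteq> w i}"
  let ?B = "{a. a < q \<and> a \<noteq> sB w} \<times> {..<q}"
  have q1: "q - 1 < q" using q2 by simp
  have qq: "q - 1 < q + 1" by simp
  have phiw: "phi w (q - 1) < q" using phi_ltV[OF w qq] .
  have wq1: "w (q - 1) < q" using w q1 by (simp add: hamming_verts_def)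
  have tB_pre: "tB (w(i := v)) \<noteq> tB w" if "i < q - 1" "v < q" "v \<noteq> w i" for i v
    using phi_upd_pre(2)[OF w that] by (simp add: tB_def)
  have tB_last: "tB (w(q - 1 := v)) = tB w" for v unfolding tB_def phi_upd_last by (rule refl)
  have inj: "inj_on ?h ?A"
  proof (rule inj_onI, clarify)
    fix i1 v1 i2 v2
    assume a: "i1 < q" "v1 < q" "v1 \<noteq> w i1" "i2 < q" "v2 < q" "v2 \<noteq> w i2"
      and eqs: "sB (w(i1 := v1)) = sB (w(i2 := v2))" "tB (w(i1 := v1)) = tB (w(i2 := v2))"
    consider "i1 = q - 1" "i2 = q - 1" | "i1 = q - 1" "i2 < q - 1" | "i1 < q - 1" "i2 = q - 1"
      | "i1 < q - 1" "i2 < q - 1" using a by linarith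
    thus "i1 = i2 \<and> v1 = v2"
    proof cases
      case 1
      hence m1: "(v1 + q - phi w (q - 1)) mod q = (v2 + q - phi w (q - 1)) mod q"
        using eqs(1) by (simp add: sB_upd_last'[OF w])
      have "v1 + q - phi w (q - 1) = v2 + q - phi w (q - 1)"
        by (rule mod_close_eq[OF _ _ m1]) (use a phiw in auto)
      thus ?thesis using 1 phiw by simp
    next
      case 2
      have "tB (w(i1 := v1)) = tB w" using 2 tB_last by simp
      moreover have "tB (w(i2 := v2)) \<noteq> tB w" using tB_pre[of i2 v2] 2 a by simp
      ultimately show ?thesis using eqs(2) by simp
    next
      case 3
      have "tB (w(i2 := v2)) = tB w" using 3 tB_last by simp
      moreover have "tB (w(i1 := v1)) \<noteq> tB w" using tB_pre[of i1 v1] 3 a by simp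
      ultimately show ?thesis using eqs(2) by simp
    next
      case 4
      have w1: "w(i1 := v1) \<in> V q q" and w2: "w(i2 := v2) \<in> V q q"
        using upd_in_verts[OF w] a by auto
      note P1 = phi[OF wV_pre[OF w1]]
      note P2 = phi[OF wV_pre[OF w2]]
      have l1: "phi (w(i1 := v1)) (q - 1) < q" "phi (w(i2 := v2)) (q - 1) < q"
        using phi_ltV[OF w1 qq] phi_ltV[OF w2 qq] by auto
      have "(w (q - 1) + q - phi (w(i1 := v1)) (q - 1)) mod q = (w (q - 1) + q - phi (w(i2 := v2)) (q - 1)) mod q"
        using eqs(1) 4 by (simp add: sB_pre[OF w])
      hence e1: "phi (w(i1 := v1)) (q - 1) = phi (w(i2 := v2)) (q - 1)"
        by (rule modsub_inj[OF l1])
      have e2: "phi (w(i1 := v1)) q = phi (w(i2 := v2)) q" using eqs(2) by (simp add: tB_def)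
      have "{j. j < q + 1 \<and> phi (w(i1 := v1)) j \<noteq> phi (w(i2 := v2)) j} \<subseteq> {i1, i2}"
      proof
        fix j assume j: "j \<in> {j. j < q + 1 \<and> phi (w(i1 := v1)) j \<noteq> phi (w(i2 := v2)) j}"
        show "j \<in> {i1, i2}"
        proof (rule ccontr)
          assume nj: "j \<notin> {i1, i2}"
          have "j < q - 1 \<or> j = q - 1 \<or> j = q" using j by auto
          moreover have "j < q - 1 \<Longrightarrow> False"
          proof -
            assume jl: "j < q - 1"
            have "phi (w(i1 := v1)) j = (w(i1 := v1)) j" using P1(2) jl by blast
            moreover have "phi (w(i2 := v2)) j = (w(i2 := v2)) j" using P2(2) jl by blast
            ultimately show False using nj j by simp
          qed
          ultimately show False using e1 e2 j by auto
        qed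
      qed
      hence pe: "phi (w(i1 := v1)) = phi (w(i2 := v2))" using code_far[OF P1(1) P2(1)] by blast
      have f1: "phi (w(i1 := v1)) i1 = (w(i1 := v1)) i1" using P1(2) 4 by blast
      have f2: "phi (w(i2 := v2)) i1 = (w(i2 := v2)) i1" using P2(2) 4 by blast
      have f3: "phi (w(i1 := v1)) i2 = (w(i1 := v1)) i2" using P1(2) 4 by blast
      have f4: "phi (w(i2 := v2)) i2 = (w(i2 := v2)) i2" using P2(2) 4 by blast
      have g1: "(w(i1 := v1)) i1 = (w(i2 := v2)) i1"
      proof -
        have "(w(i1 := v1)) i1 = phi (w(i1 := v1)) i1" using f1 by (rule sym)
        also have "\<dots> = phi (w(i2 := v2)) i1" using pe by (rule fun_cong)
        also have "\<dots> = (w(i2 := v2)) i1" by (rule f2)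
        finally show ?thesis .
      qed
      show ?thesis
      proof (cases "i1 = i2")
        case True
        thus ?thesis using g1 by simp
      next
        case False
        thus ?thesis using g1 a(3) by simp
      qed
    qed
  qed
  have sub: "?h ` ?A \<subseteq> ?B"
  proof
    fix p assume "p \<in> ?h ` ?A"
    then obtain i v where a: "i < q" "v < q" "v \<noteq> w i" and p: "p = ?h (i, v)" by auto
    have w1: "w(i := v) \<in> V q q" using upd_in_verts[OF w] a by auto
    have "sB (w(i := v)) \<noteq> sB w"
    proof (cases "i = q - 1")
      case True
      have "sB w = sB (w(q - 1 := w (q - 1)))" by simp
      hence "sB w = (w (q - 1) + q - phi w (q - 1)) mod q" by (simp only: sB_upd_last[OF w])
      moreover have "sB (w(i := v)) = (v + q - phi w (q - 1)) mod q" using True sB_upd_last[OF w] by simp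
      moreover have "(v + q - phi w (q - 1)) mod q \<noteq> (w (q - 1) + q - phi w (q - 1)) mod q"
      proof
        assume m: "(v + q - phi w (q - 1)) mod q = (w (q - 1) + q - phi w (q - 1)) mod q"
        have "v + q - phi w (q - 1) = w (q - 1) + q - phi w (q - 1)"
          by (rule mod_close_eq[OF _ _ m]) (use a phiw wq1 in auto)
        hence "v = w (q - 1)" using phiw by simp
        thus False using True a(3) by simp
      qed
      ultimately show ?thesis by simp
    next
      case False
      hence i': "i < q - 1" using a by simp
      have l1: "phi (w(i := v)) (q - 1) < q" using phi_ltV[OF w1 qq] .
      have "sB w = (w (q - 1) + q - phi w (q - 1)) mod q" by (simp add: sB_def)
      moreover have "sB (w(i := v)) = (w (q - 1) + q - phi (w(i := v)) (q - 1)) mod q"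
        using sB_pre[OF w i'] .
      ultimately show ?thesis using modsub_inj[OF l1 phiw] phi_upd_pre(1)[OF w i' a(2,3)] by auto
    qed
    thus "p \<in> ?B" using sB_lt tB_lt[OF w1] p by auto
  qed
  have cA: "card ?A = q * (q - 1)"
  proof -
    have "card ?A = (\<Sum>i<q. card {v. v < q \<and> v \<noteq> w i})" by (rule card_SigmaI) auto
    also have "\<dots> = (\<Sum>i<q. q - 1)"
      using w by (intro sum.cong refl) (simp add: card_others hamming_verts_def)
    finally show ?thesis by simp
  qed
  have cB: "card ?B = q * (q - 1)"
  proof -
    have "card {a. a < q \<and> a \<noteq> sB w} = q - 1" using card_others[OF sB_lt] .
    moreover have "card ?B = card {a. a < q \<and> a \<noteq> sB w} * card {..<q::nat}"
      by (rule card_cartesian_product)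
    ultimately show ?thesis by simp
  qed
  have "?h ` ?A = ?B"
  proof (rule card_subset_eq)
    show "finite ?B" by simp
    show "?h ` ?A \<subseteq> ?B" by (rule sub)
    show "card (?h ` ?A) = card ?B" unfolding card_image[OF inj] cA cB by (rule refl)
  qed
  thus ?thesis using inj by (simp add: bij_betw_def)
qed

lemma block_count:
  assumes w: "w \<in> V q q"
  shows "(\<Sum>i<q. card {v. v < q \<and> v \<noteq> w i \<and> R (sB (w(i := v))) (tB (w(i := v)))})
       = (\<Sum>a\<in>{a. a < q \<and> a \<noteq> sB w}. card {s. s < q \<and> R a s})"
proof -
  let ?h = "\<lambda>(i, v). (sB (w(i := v)), tB (w(i := v)))"
  let ?A = "SIGMA i:{..<q}. {v. v < q \<and> v \<noteq> w i}"
  let ?B = "{a. a < q \<and> a \<noteq> sB w} \<times> {..<q}"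
  have bij: "bij_betw ?h ?A ?B" by (rule block_bij[OF w])
  have "(\<Sum>i<q. card {v. v < q \<and> v \<noteq> w i \<and> R (sB (w(i := v))) (tB (w(i := v)))})
      = card (SIGMA i:{..<q}. {v. v < q \<and> v \<noteq> w i \<and> R (sB (w(i := v))) (tB (w(i := v)))})"
    by (rule card_SigmaI[symmetric]) auto
  also have "(SIGMA i:{..<q}. {v. v < q \<and> v \<noteq> w i \<and> R (sB (w(i := v))) (tB (w(i := v)))})
      = {p \<in> ?A. case_prod R (?h p)}" by auto
  also have "card {p \<in> ?A. case_prod R (?h p)} = card (?h ` {p \<in> ?A. case_prod R (?h p)})"
    by (rule card_image[symmetric], rule inj_on_subset[OF bij_betw_imp_inj_on[OF bij]]) auto
  also have "?h ` {p \<in> ?A. case_prod R (?h p)} = {z \<in> ?B. case_prod R z}"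
    using image_filter[OF bij_betw_imp_surj_on[OF bij]] .
  also have "{z \<in> ?B. case_prod R z} = (SIGMA a:{a. a < q \<and> a \<noteq> sB w}. {s. s < q \<and> R a s})"
    by auto
  also have "card \<dots> = (\<Sum>a\<in>{a. a < q \<and> a \<noteq> sB w}. card {s. s < q \<and> R a s})"
    by (rule card_SigmaI) auto
  finally show ?thesis .
qed

lemma block_achieve:
  assumes "a < q" "s < q"
  shows "\<exists>w\<in>V q q. sB w = a \<and> tB w = s"
proof -
  have from_w: "\<exists>w'\<in>V q q. sB w' = a' \<and> tB w' = s'" if w: "w \<in> V q q" "a' < q" "a' \<noteq> sB w" "s' < q" for w a' s'
  proof -
    have "(a', s') \<in> ({a. a < q \<and> a \<noteq> sB w} \<times> {..<q})" using that by auto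
    hence "(a', s') \<in> (\<lambda>(i, v). (sB (w(i := v)), tB (w(i := v)))) ` (SIGMA i:{..<q}. {v. v < q \<and> v \<noteq> w i})"
      using bij_betw_imp_surj_on[OF block_bij[OF w(1)]] by simp
    then obtain i v where iv: "i < q" "v < q" "a' = sB (w(i := v))" "s' = tB (w(i := v))" by auto
    thus ?thesis using upd_in_verts[OF w(1) iv(1,2)] by blast
  qed
  define w0 :: "nat \<Rightarrow> nat" where "w0 = (\<lambda>_. 0)"
  have w0: "w0 \<in> V q q" using q2 by (simp add: w0_def hamming_verts_def)
  show ?thesis
  proof (cases "a = sB w0")
    case False show ?thesis using from_w[OF w0 assms(1) False assms(2)] by blast
  next
    case True
    have "(a + 1) mod q \<noteq> a"
    proof (cases "a + 1 < q")
      case True thus ?thesis by simp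
    next
      case False
      hence "a + 1 = q" using assms(1) by simp
      thus ?thesis using q2 by auto
    qed
    hence "\<exists>w1\<in>V q q. sB w1 = (a + 1) mod q \<and> tB w1 = 0"
      using from_w[OF w0, of "(a + 1) mod q" 0] True q2 by simp
    then obtain w1 where w1: "w1 \<in> V q q" "sB w1 = (a + 1) mod q" by blast
    have "a \<noteq> sB w1" using w1(2) \<open>(a + 1) mod q \<noteq> a\<close> by simp
    thus ?thesis using from_w[OF w1(1) assms(1) _ assms(2)] by blast
  qed
qed

end


lemma card_split_filter:
  "finite S \<Longrightarrow> card {x\<in>S. P x \<and> Q x} + card {x\<in>S. P x \<and> \<not> Q x} = card {x\<in>S. P x}"
proof -
  assume fin: "finite S"
  have "{x\<in>S. P x} = {x\<in>S. P x \<and> Q x} \<union> {x\<in>S. P x \<and> \<not> Q x}" by blast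
  moreover have "{x\<in>S. P x \<and> Q x} \<inter> {x\<in>S. P x \<and> \<not> Q x} = {}" by blast
  ultimately show ?thesis using fin by (simp add: card_Un_disjoint)
qed

lemma idx_lt: "(j::nat) < n \<Longrightarrow> i < q \<Longrightarrow> j * q + i < q * n"
proof -
  assume "j < n" "i < q"
  hence "j * q + i < j * q + q" by simp
  also have "\<dots> = (j + 1) * q" by simp
  also have "\<dots> \<le> n * q" using \<open>j < n\<close> by (intro mult_right_mono) auto
  finally show ?thesis by (simp add: mult.commute)
qed

lemma idx_inj: "(i::nat) < q \<Longrightarrow> i' < q \<Longrightarrow> j * q + i = j' * q + i' \<Longrightarrow> j = j' \<and> i = i'"
proof -
  assume a: "i < q" "i' < q" "j * q + i = j' * q + i'"
  have q0: "0 < q" using a by simp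
  have "(j * q + i) div q = j" using q0 a(1) by simp
  moreover have "(j' * q + i') div q = j'" using q0 a(2) by simp
  ultimately have "j = j'" using a(3) by simp
  thus ?thesis using a(3) by simp
qed

lemma sum_split_add: "(\<Sum>p<(a::nat) + m. F p) = (\<Sum>p<a. F p) + (\<Sum>l<m. F (a + l))"
  by (induction m) (simp_all add: add.assoc)

lemma sum_blocks: "(\<Sum>p<(q::nat) * n. F p) = (\<Sum>j<n. \<Sum>i<q. F (j * q + i))"
proof -
  have "(\<Sum>p<q * n. F p) = (\<Sum>p<n * q. F p)" by (simp only: mult.commute)
  also have "\<dots> = (\<Sum>j<n. sum F {j * q..<j * q + q})" by (rule sum.nat_group[symmetric])
  also have "\<dots> = (\<Sum>j<n. \<Sum>i<q. F (j * q + i))"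
  proof (rule sum.cong[OF refl])
    fix j
    have "sum F {j * q..<j * q + q} = sum F {0 + j * q..<q + j * q}" by (simp add: add.commute)
    also have "\<dots> = (\<Sum>i = 0..<q. F (i + j * q))" by (rule sum.shift_bounds_nat_ivl)
    also have "\<dots> = (\<Sum>i<q. F (j * q + i))" by (simp add: atLeast0LessThan add.commute)
    finally show "sum F {j * q..<j * q + q} = (\<Sum>i<q. F (j * q + i))" .
  qed
  finally show ?thesis .
qed

definition good :: "nat \<Rightarrow> nat \<Rightarrow> nat \<Rightarrow> nat \<Rightarrow> nat \<Rightarrow> nat \<Rightarrow> ((nat \<Rightarrow> nat) \<Rightarrow> nat) \<Rightarrow> bool" where
  "good n q b c k m f \<longleftrightarrow> is_coloring n q b c f \<and>
     (\<exists>P. (\<forall>F\<in>P. is_face n q k F) \<and> (\<forall>F\<in>P. \<forall>G\<in>P. F \<noteq> G \<longrightarrow> F \<inter> G = {}) \<and>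
          \<Union>P = {x \<in> hamming_verts n q. f x = 1}) \<and>
     int m = int k * (int q - 1) - main_eigenvalue n q b c"

locale constr = pcode C q for C q +
  fixes n k b c m t :: nat and f :: "(nat \<Rightarrow> nat) \<Rightarrow> nat" and P :: "(nat \<Rightarrow> nat) set set"
  assumes col: "is_coloring n q b c f"
    and faces: "\<forall>F\<in>P. is_face n q k F"
    and disj: "\<forall>F\<in>P. \<forall>G\<in>P. F \<noteq> G \<longrightarrow> F \<inter> G = {}"
    and union: "\<Union>P = {x \<in> hamming_verts n q. f x = 1}"
    and mdef: "int m = int k * (int q - 1) - main_eigenvalue n q b c"
    and t1: "1 \<le> t" and tq: "t \<le> q"
begin

lemma f12: "x \<in> V n q \<Longrightarrow> f x = 1 \<or> f x = 2"
  using col unfolding is_coloring_def by blast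

definition KF :: "(nat \<Rightarrow> nat) set \<Rightarrow> nat set" where
  "KF F = (SOME K. \<exists>a. K \<subseteq> {..<n} \<and> card K = k \<and> (\<forall>i\<in>{..<n} - K. a i < q) \<and>
      F = {x \<in> hamming_verts n q. \<forall>i\<in>{..<n} - K. x i = a i})"

lemma KF: assumes "F \<in> P"
  shows "KF F \<subseteq> {..<n}" "card (KF F) = k"
    "\<exists>a. F = {x \<in> hamming_verts n q. \<forall>i\<in>{..<n} - KF F. x i = a i}"
proof -
  have "\<exists>K a. K \<subseteq> {..<n} \<and> card K = k \<and> (\<forall>i\<in>{..<n} - K. a i < q) \<and>
      F = {x \<in> hamming_verts n q. \<forall>i\<in>{..<n} - K. x i = a i}"
    using faces assms by (simp add: is_face_def)
  hence "\<exists>a. KF F \<subseteq> {..<n} \<and> card (KF F) = k \<and> (\<forall>i\<in>{..<n} - KF F. a i < q) \<and>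
      F = {x \<in> hamming_verts n q. \<forall>i\<in>{..<n} - KF F. x i = a i}"
    unfolding KF_def by (rule someI_ex)
  thus "KF F \<subseteq> {..<n}" "card (KF F) = k"
    "\<exists>a. F = {x \<in> hamming_verts n q. \<forall>i\<in>{..<n} - KF F. x i = a i}" by blast+
qed

lemma face_at: assumes "F \<in> P" "x \<in> F"
  shows "F = {y \<in> hamming_verts n q. \<forall>i\<in>{..<n} - KF F. y i = x i}"
proof -
  obtain a where a: "F = {x \<in> hamming_verts n q. \<forall>i\<in>{..<n} - KF F. x i = a i}" using KF(3)[OF assms(1)] by blast
  have "\<forall>i\<in>{..<n} - KF F. x i = a i" using assms(2) a by blast
  thus ?thesis using a by auto
qed

definition Fc :: "(nat \<Rightarrow> nat) \<Rightarrow> (nat \<Rightarrow> nat) set" where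
  "Fc x = (SOME F. F \<in> P \<and> x \<in> F)"

definition Kc :: "(nat \<Rightarrow> nat) \<Rightarrow> nat set" where
  "Kc x = KF (Fc x)"

lemma Fc: assumes "x \<in> V n q" "f x = 1" shows "Fc x \<in> P" "x \<in> Fc x"
proof -
  have "\<exists>F. F \<in> P \<and> x \<in> F" using assms union by blast
  hence "Fc x \<in> P \<and> x \<in> Fc x" unfolding Fc_def by (rule someI_ex)
  thus "Fc x \<in> P" "x \<in> Fc x" by auto
qed

lemma Fc_unique: assumes "F \<in> P" "x \<in> F" shows "Fc x = F"
proof -
  have "x \<in> V n q" "f x = 1" using assms union by blast+
  hence "Fc x \<in> P" "x \<in> Fc x" using Fc by auto
  thus ?thesis using disj assms by blast
qed

lemma in_P_col: assumes "F \<in> P" "y \<in> F" shows "y \<in> V n q" "f y = 1"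
  using assms union by blast+

lemma Fc_rep: assumes "x \<in> V n q" "f x = 1"
  shows "Fc x = {y \<in> V n q. \<forall>i\<in>{..<n} - Kc x. y i = x i}" "Kc x \<subseteq> {..<n}" "card (Kc x) = k"
  using face_at[OF Fc[OF assms]] KF[OF Fc(1)[OF assms]] by (simp_all add: Kc_def)

lemma same_face: assumes "x \<in> V n q" "f x = 1" "x' \<in> Fc x"
  shows "x' \<in> V n q" "f x' = 1" "Fc x' = Fc x" "Kc x' = Kc x"
proof -
  show "x' \<in> V n q" "f x' = 1" using in_P_col Fc[OF assms(1,2)] assms(3) by blast+
  show "Fc x' = Fc x" using Fc_unique Fc[OF assms(1,2)] assms(3) by blast
  thus "Kc x' = Kc x" by (simp add: Kc_def)
qed

lemma nbr_in_face:
  assumes x: "x \<in> V n q" "f x = 1" and j: "j < n" and a: "a < q" "a \<noteq> x j"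
  shows "x(j := a) \<in> Fc x \<longleftrightarrow> j \<in> Kc x"
proof
  assume "x(j := a) \<in> Fc x"
  hence "\<forall>i\<in>{..<n} - Kc x. (x(j := a)) i = x i" using Fc_rep[OF x] by blast
  thus "j \<in> Kc x" using j a by (metis DiffI fun_upd_same lessThan_iff)
next
  assume "j \<in> Kc x"
  moreover have "x(j := a) \<in> V n q" using upd_in_verts[OF x(1) j a(1)] .
  ultimately show "x(j := a) \<in> Fc x" using Fc_rep[OF x] by auto
qed

lemma nbr_out_face:
  assumes x: "x \<in> V n q" and j: "j < n" and a: "a < q" "a \<noteq> x j"
    and f1: "f (x(j := a)) = 1" and jK: "j \<in> Kc (x(j := a))"
  shows "f x = 1 \<and> x(j := a) \<in> Fc x"
proof -
  let ?x' = "x(j := a)"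
  have x'V: "?x' \<in> V n q" using upd_in_verts[OF x(1) j a(1)] .
  have "x \<in> Fc ?x'"
  proof -
    have "\<forall>i\<in>{..<n} - Kc ?x'. x i = ?x' i" using jK by auto
    thus ?thesis using Fc_rep(1)[OF x'V f1] x by blast
  qed
  hence "f x = 1" "Fc x = Fc ?x'" using same_face[OF x'V f1] by auto
  thus ?thesis using Fc(2)[OF x'V f1] by simp
qed

lemma count_in_face:
  assumes x: "x \<in> V n q" "f x = 1"
  shows "card {x' \<in> V n q. hamming_adj n x x' \<and> (f x' = 1 \<and> f x = 1 \<and> x' \<in> Fc x)} = k * (q - 1)"
proof -
  have "card {x' \<in> V n q. hamming_adj n x x' \<and> (f x' = 1 \<and> f x = 1 \<and> x' \<in> Fc x)}
      = (\<Sum>j<n. card {a. a < q \<and> a \<noteq> x j \<and> (f (x(j := a)) = 1 \<and> f x = 1 \<and> x(j := a) \<in> Fc x)})"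
    by (rule nbr_count[OF x(1)])
  also have "\<dots> = (\<Sum>j<n. if j \<in> Kc x then q - 1 else 0)"
  proof (rule sum.cong[OF refl])
    fix j assume j: "j \<in> {..<n}"
    have "{a. a < q \<and> a \<noteq> x j \<and> (f (x(j := a)) = 1 \<and> f x = 1 \<and> x(j := a) \<in> Fc x)}
        = (if j \<in> Kc x then {a. a < q \<and> a \<noteq> x j} else {})"
      using nbr_in_face[OF x, of j] same_face[OF x] j x(2) by auto
    moreover have "x j < q" using x(1) j by (simp add: hamming_verts_def)
    ultimately show "card {a. a < q \<and> a \<noteq> x j \<and> (f (x(j := a)) = 1 \<and> f x = 1 \<and> x(j := a) \<in> Fc x)}
        = (if j \<in> Kc x then q - 1 else 0)" by (simp add: card_others)
  qed
  also have "\<dots> = (\<Sum>j\<in>{..<n} \<inter> Kc x. q - 1)" by (simp add: sum.If_cases)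
  also have "{..<n} \<inter> Kc x = Kc x" using Fc_rep(2)[OF x] by blast
  finally show ?thesis using Fc_rep(3)[OF x] by simp
qed

end


context constr begin

definition N :: nat where "N = q * n + m"
definition blk :: "nat \<Rightarrow> (nat \<Rightarrow> nat) \<Rightarrow> (nat \<Rightarrow> nat)" where
  "blk j y = (\<lambda>i. if i < q then y (j * q + i) else 0)"
definition sig :: "(nat \<Rightarrow> nat) \<Rightarrow> (nat \<Rightarrow> nat)" where
  "sig y = (\<lambda>j. if j < n then sB (blk j y) else 0)"
definition zs :: "(nat \<Rightarrow> nat) \<Rightarrow> nat" where
  "zs y = (\<Sum>l<m. y (q * n + l))"
definition hs :: "(nat \<Rightarrow> nat) \<Rightarrow> nat" where
  "hs y = (\<Sum>j\<in>{..<n} - Kc (sig y). tB (blk j y)) + zs y"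
definition g :: "(nat \<Rightarrow> nat) \<Rightarrow> nat" where
  "g y = (if f (sig y) = 1 \<and> hs y mod q < t then 1 else 2)"
definition Gj :: "(nat \<Rightarrow> nat) \<Rightarrow> nat \<Rightarrow> nat \<Rightarrow> nat \<Rightarrow> nat" where
  "Gj y j a s = (if f ((sig y)(j := a)) = 1 \<and>
      ((\<Sum>j'\<in>{..<n} - Kc ((sig y)(j := a)). if j' = j then s else tB (blk j' y)) + zs y) mod q < t
     then 1 else 2)"

lemma blkV: assumes "y \<in> V N q" "j < n" shows "blk j y \<in> V q q"
proof -
  have "y (j * q + i) < q" if "i < q" for i
  proof -
    have "j * q + i < N" using idx_lt[OF assms(2) that] by (simp add: N_def)
    thus ?thesis using assms(1) by (simp add: hamming_verts_def)
  qed
  thus ?thesis by (auto simp: blk_def hamming_verts_def)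
qed

lemma blk_i: "i < q \<Longrightarrow> blk j y i = y (j * q + i)"
  by (simp add: blk_def)

lemma sigV: "sig y \<in> V n q"
  using sB_lt by (auto simp: sig_def hamming_verts_def)

lemma blk_upd: assumes "i < q"
  shows "blk j' (y(j * q + i := v)) = (if j' = j then (blk j y)(i := v) else blk j' y)"
proof (rule ext)
  fix i'
  show "blk j' (y(j * q + i := v)) i' = (if j' = j then (blk j y)(i := v) else blk j' y) i'"
  proof (cases "i' < q")
    case True
    show ?thesis
    proof (cases "j' = j")
      case True
      thus ?thesis using \<open>i' < q\<close> by (simp add: blk_def)
    next
      case False
      have "j' * q + i' \<noteq> j * q + i" using idx_inj[OF \<open>i' < q\<close> assms] False by auto
      thus ?thesis using False \<open>i' < q\<close> by (simp add: blk_def)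
    qed
  next
    case False thus ?thesis using assms by (simp add: blk_def)
  qed
qed

lemma sig_upd: assumes "j < n" "i < q"
  shows "sig (y(j * q + i := v)) = (sig y)(j := sB ((blk j y)(i := v)))"
  using assms by (auto simp: sig_def blk_upd)

lemma zs_upd: assumes "j < n" "i < q" shows "zs (y(j * q + i := v)) = zs y"
proof -
  have "q * n + l \<noteq> j * q + i" for l using idx_lt[OF assms] by linarith
  thus ?thesis by (simp add: zs_def)
qed

lemma blk_updz: "j < n \<Longrightarrow> blk j (y(q * n + l := v)) = blk j y"
proof (rule ext)
  fix i assume j: "j < n"
  show "blk j (y(q * n + l := v)) i = blk j y i"
  proof (cases "i < q")
    case True
    have "j * q + i \<noteq> q * n + l" using idx_lt[OF j True] by linarith
    thus ?thesis by (simp add: blk_def)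
  qed (simp add: blk_def)
qed

lemma sig_updz: "sig (y(q * n + l := v)) = sig y"
  by (auto simp: sig_def blk_updz)

lemma zs_updz: assumes "l < m" shows "zs (y(q * n + l := v)) + y (q * n + l) = zs y + v"
proof -
  have fin: "finite {..<m}" by simp
  have lm: "l \<in> {..<m}" using assms by simp
  have "zs (y(q * n + l := v)) = (y(q * n + l := v)) (q * n + l) + (\<Sum>l'\<in>{..<m} - {l}. (y(q * n + l := v)) (q * n + l'))"
    unfolding zs_def by (rule sum.remove[OF fin lm])
  moreover have "zs y = y (q * n + l) + (\<Sum>l'\<in>{..<m} - {l}. y (q * n + l'))"
    unfolding zs_def by (rule sum.remove[OF fin lm])
  moreover have "(\<Sum>l'\<in>{..<m} - {l}. (y(q * n + l := v)) (q * n + l')) = (\<Sum>l'\<in>{..<m} - {l}. y (q * n + l'))"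
    by (rule sum.cong) auto
  ultimately show ?thesis by simp
qed

lemma hs_updz: assumes "l < m" shows "hs (y(q * n + l := v)) + y (q * n + l) = hs y + v"
  using zs_updz[OF assms, of y v] by (simp add: hs_def sig_updz blk_updz)

lemma g_upd: assumes "j < n" "i < q"
  shows "g (y(j * q + i := v)) = Gj y j (sB ((blk j y)(i := v))) (tB ((blk j y)(i := v)))"
proof -
  let ?a = "sB ((blk j y)(i := v))"
  have s: "sig (y(j * q + i := v)) = (sig y)(j := ?a)" by (rule sig_upd[OF assms])
  have "(\<Sum>j'\<in>{..<n} - Kc ((sig y)(j := ?a)). tB (blk j' (y(j * q + i := v))))
      = (\<Sum>j'\<in>{..<n} - Kc ((sig y)(j := ?a)). if j' = j then tB ((blk j y)(i := v)) else tB (blk j' y))"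
    by (rule sum.cong[OF refl]) (simp add: blk_upd[OF assms(2)])
  thus ?thesis unfolding g_def Gj_def hs_def s zs_upd[OF assms] by simp
qed

lemma count_N:
  assumes y: "y \<in> V N q"
  shows "card {y' \<in> V N q. hamming_adj N y y' \<and> g y' = c0}
    = (\<Sum>j<n. \<Sum>a\<in>{a. a < q \<and> a \<noteq> sig y j}. card {s. s < q \<and> Gj y j a s = c0})
      + (\<Sum>l<m. card {v. v < q \<and> v \<noteq> y (q * n + l) \<and> g (y(q * n + l := v)) = c0})"
proof -
  have "card {y' \<in> V N q. hamming_adj N y y' \<and> g y' = c0}
      = (\<Sum>p<N. card {v. v < q \<and> v \<noteq> y p \<and> g (y(p := v)) = c0})"
    by (rule nbr_count[OF y])
  also have "\<dots> = (\<Sum>p<q * n. card {v. v < q \<and> v \<noteq> y p \<and> g (y(p := v)) = c0})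
      + (\<Sum>l<m. card {v. v < q \<and> v \<noteq> y (q * n + l) \<and> g (y(q * n + l := v)) = c0})"
    unfolding N_def by (rule sum_split_add)
  also have "(\<Sum>p<q * n. card {v. v < q \<and> v \<noteq> y p \<and> g (y(p := v)) = c0})
      = (\<Sum>j<n. \<Sum>i<q. card {v. v < q \<and> v \<noteq> y (j * q + i) \<and> g (y(j * q + i := v)) = c0})"
    by (rule sum_blocks)
  also have "\<dots> = (\<Sum>j<n. \<Sum>a\<in>{a. a < q \<and> a \<noteq> sig y j}. card {s. s < q \<and> Gj y j a s = c0})"
  proof (rule sum.cong[OF refl])
    fix j assume j: "j \<in> {..<n}"
    have w: "blk j y \<in> V q q" using blkV[OF y] j by simp
    have "(\<Sum>i<q. card {v. v < q \<and> v \<noteq> y (j * q + i) \<and> g (y(j * q + i := v)) = c0})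
       = (\<Sum>i<q. card {v. v < q \<and> v \<noteq> blk j y i \<and>
            Gj y j (sB ((blk j y)(i := v))) (tB ((blk j y)(i := v))) = c0})"
      using j by (intro sum.cong refl) (simp add: g_upd blk_i)
    also have "\<dots> = (\<Sum>a\<in>{a. a < q \<and> a \<noteq> sB (blk j y)}. card {s. s < q \<and> Gj y j a s = c0})"
      by (rule block_count[OF w])
    also have "sB (blk j y) = sig y j" using j by (simp add: sig_def)
    finally show "(\<Sum>i<q. card {v. v < q \<and> v \<noteq> y (j * q + i) \<and> g (y(j * q + i := v)) = c0})
       = (\<Sum>a\<in>{a. a < q \<and> a \<noteq> sig y j}. card {s. s < q \<and> Gj y j a s = c0})" .
  qed
  finally show ?thesis .
qed

end


context constr begin

lemma q0: "0 < q" using q2 by simp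

lemma ite_split:
  "(if A then (if B then Q else t) else 0) = t * (if A \<and> \<not> B then 1 else 0) + Q * (if A \<and> B then 1 else (0::nat))"
  by auto

lemma cnt1:
  assumes y: "y \<in> V N q" and j: "j < n" and a: "a < q" "a \<noteq> sig y j"
  shows "card {s. s < q \<and> Gj y j a s = 1} =
    (if f ((sig y)(j := a)) = 1 then (if f (sig y) = 1 \<and> (sig y)(j := a) \<in> Fc (sig y)
       then (if g y = 1 then q else 0) else t) else 0)"
proof -
  let ?x = "sig y" let ?x' = "(sig y)(j := a)"
  have xV: "?x \<in> V n q" by (rule sigV)
  show ?thesis
  proof (cases "f ?x' = 1")
    case False
    hence "{s. s < q \<and> Gj y j a s = 1} = {}" by (auto simp: Gj_def)
    thus ?thesis using False by simp
  next
    case f1: True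
    show ?thesis
    proof (cases "f ?x = 1 \<and> ?x' \<in> Fc ?x")
      case True
      have K: "Kc ?x' = Kc ?x" using same_face[OF xV] True by blast
      have jK: "j \<in> Kc ?x" using nbr_in_face[OF xV _ j a(1)] True a(2) by blast
      have "(\<Sum>j'\<in>{..<n} - Kc ?x'. if j' = j then s else tB (blk j' y))
          = (\<Sum>j'\<in>{..<n} - Kc ?x. tB (blk j' y))" for s
        unfolding K by (rule sum.cong[OF refl]) (use jK in auto)
      hence "Gj y j a s = g y" for s using f1 True by (simp add: Gj_def g_def hs_def)
      hence "{s. s < q \<and> Gj y j a s = 1} = (if g y = 1 then {..<q} else {})" by auto
      thus ?thesis using f1 True by simp
    next
      case False
      have jK: "j \<notin> Kc ?x'"
      proof
        assume "j \<in> Kc ?x'"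
        hence "f ?x = 1 \<and> ?x' \<in> Fc ?x" using nbr_out_face[OF xV j a(1)] a(2) f1 by simp
        thus False using False by simp
      qed
      have fin: "finite ({..<n} - Kc ?x')" by simp
      have jin: "j \<in> {..<n} - Kc ?x'" using j jK by simp
      define A where "A = (\<Sum>j'\<in>({..<n} - Kc ?x') - {j}. tB (blk j' y)) + zs y"
      have "(\<Sum>j'\<in>{..<n} - Kc ?x'. if j' = j then s else tB (blk j' y))
          = s + (\<Sum>j'\<in>({..<n} - Kc ?x') - {j}. tB (blk j' y))" for s
      proof -
        have "(\<Sum>j'\<in>{..<n} - Kc ?x'. if j' = j then s else tB (blk j' y))
          = (if j = j then s else tB (blk j y)) + (\<Sum>j'\<in>({..<n} - Kc ?x') - {j}. if j' = j then s else tB (blk j' y))"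
          by (rule sum.remove[OF fin jin])
        moreover have "(\<Sum>j'\<in>({..<n} - Kc ?x') - {j}. if j' = j then s else tB (blk j' y))
          = (\<Sum>j'\<in>({..<n} - Kc ?x') - {j}. tB (blk j' y))"
          by (rule sum.cong) auto
        ultimately show ?thesis by simp
      qed
      hence "Gj y j a s = (if (s + A) mod q < t then 1 else 2)" for s
        using f1 by (simp add: Gj_def A_def add.assoc)
      hence "{s. s < q \<and> Gj y j a s = 1} = {s. s < q \<and> (s + A) mod q < t}" by auto
      hence "card {s. s < q \<and> Gj y j a s = 1} = t" using mod_count_t[OF q0 tq] by simp
      thus ?thesis using f1 False by auto
    qed
  qed
qed

lemma cntz1:
  assumes y: "y \<in> V N q" and l: "l < m"
  shows "card {v. v < q \<and> v \<noteq> y (q * n + l) \<and> g (y(q * n + l := v)) = 1}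
    = (if f (sig y) = 1 then t - (if g y = 1 then 1 else 0) else 0)"
proof (cases "f (sig y) = 1")
  case False
  hence "{v. v < q \<and> v \<noteq> y (q * n + l) \<and> g (y(q * n + l := v)) = 1} = {}"
    by (auto simp: g_def sig_updz)
  thus ?thesis using False by simp
next
  case True
  let ?z = "y (q * n + l)"
  have zq: "?z < q" using y l by (simp add: hamming_verts_def N_def)
  have h0: "hs (y(q * n + l := 0)) + ?z = hs y" using hs_updz[OF l, of y 0] by simp
  define A where "A = hs y - ?z"
  have hA: "hs (y(q * n + l := v)) = v + A" for v
    using hs_updz[OF l, of y v] h0 by (simp add: A_def)
  have hy: "hs y = ?z + A" using h0 by (simp add: A_def)
  have "{v. v < q \<and> v \<noteq> ?z \<and> g (y(q * n + l := v)) = 1} = {v. v < q \<and> (v + A) mod q < t} - {?z}"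
    using True by (auto simp: g_def sig_updz hA)
  moreover have "card {v. v < q \<and> (v + A) mod q < t} = t" by (rule mod_count_t[OF q0 tq])
  moreover have "?z \<in> {v. v < q \<and> (v + A) mod q < t} \<longleftrightarrow> g y = 1"
    using True zq by (simp add: g_def hy)
  ultimately show ?thesis using True by (auto simp: card_Diff_singleton_if)
qed

lemma sum_ind_nbr:
  assumes x: "x \<in> V n q"
  shows "(\<Sum>j<n. \<Sum>a\<in>{a. a < q \<and> a \<noteq> x j}. (if Phi (x(j := a)) then 1 else 0::nat))
       = card {x' \<in> V n q. hamming_adj n x x' \<and> Phi x'}"
proof -
  have "(\<Sum>j<n. \<Sum>a\<in>{a. a < q \<and> a \<noteq> x j}. (if Phi (x(j := a)) then 1 else 0::nat))
      = (\<Sum>j<n. card {a. a < q \<and> a \<noteq> x j \<and> Phi (x(j := a))})"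
  proof (rule sum.cong[OF refl])
    fix j
    have "(\<Sum>a\<in>{a. a < q \<and> a \<noteq> x j}. (if Phi (x(j := a)) then 1 else 0::nat))
        = card {a \<in> {a. a < q \<and> a \<noteq> x j}. Phi (x(j := a))}"
      by (simp add: sum.inter_filter[symmetric])
    also have "{a \<in> {a. a < q \<and> a \<noteq> x j}. Phi (x(j := a))} = {a. a < q \<and> a \<noteq> x j \<and> Phi (x(j := a))}"
      by auto
    finally show "(\<Sum>a\<in>{a. a < q \<and> a \<noteq> x j}. (if Phi (x(j := a)) then 1 else 0::nat))
        = card {a. a < q \<and> a \<noteq> x j \<and> Phi (x(j := a))}" .
  qed
  also have "\<dots> = card {x' \<in> V n q. hamming_adj n x x' \<and> Phi x'}"
    by (rule nbr_count[OF x, symmetric])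
  finally show ?thesis .
qed

lemma count_g1:
  assumes y: "y \<in> V N q"
  shows "card {y' \<in> V N q. hamming_adj N y y' \<and> g y' = 1}
    = t * card {x' \<in> V n q. hamming_adj n (sig y) x' \<and> (f x' = 1 \<and> \<not> (f (sig y) = 1 \<and> x' \<in> Fc (sig y)))}
      + (if g y = 1 then q else 0) * card {x' \<in> V n q. hamming_adj n (sig y) x' \<and> (f x' = 1 \<and> (f (sig y) = 1 \<and> x' \<in> Fc (sig y)))}
      + m * (if f (sig y) = 1 then t - (if g y = 1 then 1 else 0) else 0)"
proof -
  let ?x = "sig y"
  let ?Q = "(if g y = 1 then q else 0)"
  let ?P1 = "\<lambda>x'. f x' = 1 \<and> \<not> (f ?x = 1 \<and> x' \<in> Fc ?x)"
  let ?P2 = "\<lambda>x'. f x' = 1 \<and> (f ?x = 1 \<and> x' \<in> Fc ?x)"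
  have "(\<Sum>j<n. \<Sum>a\<in>{a. a < q \<and> a \<noteq> ?x j}. card {s. s < q \<and> Gj y j a s = 1})
      = (\<Sum>j<n. \<Sum>a\<in>{a. a < q \<and> a \<noteq> ?x j}.
          t * (if ?P1 (?x(j := a)) then 1 else 0) + ?Q * (if ?P2 (?x(j := a)) then 1 else 0))"
  proof (intro sum.cong refl)
    fix j a assume j: "j \<in> {..<n}" and a: "a \<in> {a. a < q \<and> a \<noteq> ?x j}"
    show "card {s. s < q \<and> Gj y j a s = 1} =
        t * (if ?P1 (?x(j := a)) then 1 else 0) + ?Q * (if ?P2 (?x(j := a)) then 1 else 0)"
    proof -
      have c: "card {s. s < q \<and> Gj y j a s = 1} =
        (if f ((sig y)(j := a)) = 1 then (if f (sig y) = 1 \<and> (sig y)(j := a) \<in> Fc (sig y)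
         then (if g y = 1 then q else 0) else t) else 0)"
        by (rule cnt1[OF y]) (use j a in auto)
      show ?thesis unfolding c by (rule ite_split)
    qed
  qed
  also have "\<dots> = t * (\<Sum>j<n. \<Sum>a\<in>{a. a < q \<and> a \<noteq> ?x j}. (if ?P1 (?x(j := a)) then 1 else 0))
      + ?Q * (\<Sum>j<n. \<Sum>a\<in>{a. a < q \<and> a \<noteq> ?x j}. (if ?P2 (?x(j := a)) then 1 else 0))"
    by (simp add: sum.distrib sum_distrib_left)
  also have "\<dots> = t * card {x' \<in> V n q. hamming_adj n ?x x' \<and> ?P1 x'}
      + ?Q * card {x' \<in> V n q. hamming_adj n ?x x' \<and> ?P2 x'}"
    unfolding sum_ind_nbr[OF sigV[of y], where Phi = ?P1] sum_ind_nbr[OF sigV[of y], where Phi = ?P2] ..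
  finally have B: "(\<Sum>j<n. \<Sum>a\<in>{a. a < q \<and> a \<noteq> ?x j}. card {s. s < q \<and> Gj y j a s = 1})
      = t * card {x' \<in> V n q. hamming_adj n ?x x' \<and> ?P1 x'}
      + ?Q * card {x' \<in> V n q. hamming_adj n ?x x' \<and> ?P2 x'}" .
  have Z: "(\<Sum>l<m. card {v. v < q \<and> v \<noteq> y (q * n + l) \<and> g (y(q * n + l := v)) = 1})
      = m * (if f ?x = 1 then t - (if g y = 1 then 1 else 0) else 0)"
    using cntz1[OF y] by simp
  show ?thesis using count_N[OF y, of 1] B Z by simp
qed

end


context constr begin

lemma g12: "g y = 1 \<or> g y = 2" by (simp add: g_def)

lemma tc_le: "t * c \<le> q * (b + c)"
proof -
  have "t * c \<le> q * c" using tq by simp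
  also have "\<dots> \<le> q * (b + c)" by simp
  finally show ?thesis .
qed

lemma c_val:
  assumes y: "y \<in> V N q"
  shows "int (card {y' \<in> V N q. hamming_adj N y y' \<and> g y' = 1})
    = (if g y = 1 then int N * (int q - 1) - (int q * (int b + int c) - int t * int c) else int t * int c)"
proof -
  let ?x = "sig y"
  have xV: "?x \<in> V n q" by (rule sigV)
  let ?n1 = "card {x' \<in> V n q. hamming_adj n ?x x' \<and> f x' = 1}"
  let ?n2 = "card {x' \<in> V n q. hamming_adj n ?x x' \<and> f x' = 2}"
  let ?no = "card {x' \<in> V n q. hamming_adj n ?x x' \<and> (f x' = 1 \<and> \<not> (f ?x = 1 \<and> x' \<in> Fc ?x))}"
  let ?ni = "card {x' \<in> V n q. hamming_adj n ?x x' \<and> (f x' = 1 \<and> (f ?x = 1 \<and> x' \<in> Fc ?x))}"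
  have fin: "finite (V n q)" by (rule finite_verts)
  have tot: "?n1 + ?n2 = n * (q - 1)"
  proof -
    have "card {x' \<in> V n q. hamming_adj n ?x x' \<and> f x' = 1} + card {x' \<in> V n q. hamming_adj n ?x x' \<and> \<not> f x' = 1}
        = card {x' \<in> V n q. hamming_adj n ?x x'}"
      by (rule card_split_filter[OF fin])
    moreover have "{x' \<in> V n q. hamming_adj n ?x x' \<and> \<not> f x' = 1} = {x' \<in> V n q. hamming_adj n ?x x' \<and> f x' = 2}"
      using f12 by force
    ultimately show ?thesis using nbr_total[OF xV] by simp
  qed
  have split: "?ni + ?no = ?n1"
  proof -
    have "card {x' \<in> V n q. (hamming_adj n ?x x' \<and> f x' = 1) \<and> (f ?x = 1 \<and> x' \<in> Fc ?x)}
        + card {x' \<in> V n q. (hamming_adj n ?x x' \<and> f x' = 1) \<and> \<not> (f ?x = 1 \<and> x' \<in> Fc ?x)}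
        = card {x' \<in> V n q. hamming_adj n ?x x' \<and> f x' = 1}"
      by (rule card_split_filter[OF fin])
    thus ?thesis by (simp add: conj_assoc)
  qed
  have cg: "card {y' \<in> V N q. hamming_adj N y y' \<and> g y' = 1} =
      t * ?no + (if g y = 1 then q else 0) * ?ni + m * (if f ?x = 1 then t - (if g y = 1 then 1 else 0) else 0)"
    by (rule count_g1[OF y])
  have mi: "int m = int k * (int q - 1) - (int n * (int q - 1) - (int b + int c))"
    using mdef by (simp add: main_eigenvalue_def)
  have q1: "int (q - 1) = int q - 1" using q2 by simp
  have Nd: "int N = int q * int n + int m" by (simp add: N_def)
  show ?thesis
  proof (cases "f ?x = 1")
    case False
    hence f2: "f ?x = 2" using f12[OF xV] by simp
    hence gy: "g y = 2" by (simp add: g_def)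
    have "?ni = 0" using False by simp
    moreover have "?no = ?n1" using False by simp
    moreover have "?n1 = c" using col xV f2 unfolding is_coloring_def by blast
    ultimately show ?thesis using cg gy False by simp
  next
    case True
    have ni: "?ni = k * (q - 1)" using count_in_face[OF xV True] .
    have n2: "?n2 = b" using col xV True unfolding is_coloring_def by blast
    have "int (?n1 + ?n2) = int (n * (q - 1))" using tot by (rule arg_cong)
    hence "int ?n1 + int ?n2 = int n * int (q - 1)" by (simp only: of_nat_add of_nat_mult)
    hence e1: "int ?n1 + int b = int n * (int q - 1)" using n2 q1 by simp
    have "int (?ni + ?no) = int ?n1" using split by (rule arg_cong)
    hence s1: "int ?ni + int ?no = int ?n1" by (simp only: of_nat_add)
    have "int ?ni = int (k * (q - 1))" using ni by (rule arg_cong)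
    hence s2: "int ?ni = int k * (int q - 1)" using q1 by (simp only: of_nat_mult)
    have e2: "int ?no = int ?n1 - int k * (int q - 1)" using s1 s2 by linarith
    show ?thesis
    proof (cases "g y = 1")
      case g1: True
      have "int (card {y' \<in> V N q. hamming_adj N y y' \<and> g y' = 1}) =
          int t * int ?no + int q * (int k * (int q - 1)) + int m * (int t - 1)"
        using cg g1 True ni t1 q1 by (simp add: of_nat_diff)
      also have "\<dots> = int N * (int q - 1) - (int q * (int b + int c) - int t * int c)"
        unfolding Nd e2 using e1 mi by algebra
      finally show ?thesis using g1 by simp
    next
      case g2: False
      have "int (card {y' \<in> V N q. hamming_adj N y y' \<and> g y' = 1}) = int t * int ?no + int m * int t"
        using cg g2 True by simp
      also have "\<dots> = int t * int c" unfolding e2 using e1 mi by algebra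
      finally show ?thesis using g2 by simp
    qed
  qed
qed

lemma g_counts:
  assumes y: "y \<in> V N q"
  shows "g y = 1 \<Longrightarrow> card {y' \<in> V N q. hamming_adj N y y' \<and> g y' = 2} = q * (b + c) - t * c"
    and "g y = 2 \<Longrightarrow> card {y' \<in> V N q. hamming_adj N y y' \<and> g y' = 1} = t * c"
proof -
  have fin: "finite (V N q)" by (rule finite_verts)
  have "card {y' \<in> V N q. hamming_adj N y y' \<and> g y' = 1} + card {y' \<in> V N q. hamming_adj N y y' \<and> \<not> g y' = 1}
      = card {y' \<in> V N q. hamming_adj N y y'}" by (rule card_split_filter[OF fin])
  moreover have "{y' \<in> V N q. hamming_adj N y y' \<and> \<not> g y' = 1} = {y' \<in> V N q. hamming_adj N y y' \<and> g y' = 2}"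
    using g12 by force
  ultimately have tot: "card {y' \<in> V N q. hamming_adj N y y' \<and> g y' = 1} + card {y' \<in> V N q. hamming_adj N y y' \<and> g y' = 2}
      = N * (q - 1)" using nbr_total[OF y] by simp
  have q1: "int (q - 1) = int q - 1" using q2 by simp
  have tc: "int (q * (b + c) - t * c) = int q * (int b + int c) - int t * int c"
    using tc_le by (simp add: of_nat_diff)
  show "card {y' \<in> V N q. hamming_adj N y y' \<and> g y' = 2} = q * (b + c) - t * c" if "g y = 1"
  proof -
    have "int (card {y' \<in> V N q. hamming_adj N y y' \<and> g y' = 1} + card {y' \<in> V N q. hamming_adj N y y' \<and> g y' = 2})
      = int (N * (q - 1))" using tot by (rule arg_cong)
    hence "int (card {y' \<in> V N q. hamming_adj N y y' \<and> g y' = 1}) + int (card {y' \<in> V N q. hamming_adj N y y' \<and> g y' = 2})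
      = int N * (int q - 1)" using q1 by (simp only: of_nat_add of_nat_mult)
    hence "int (card {y' \<in> V N q. hamming_adj N y y' \<and> g y' = 2}) = int q * (int b + int c) - int t * int c"
      using c_val[OF y] that by simp
    hence "int (card {y' \<in> V N q. hamming_adj N y y' \<and> g y' = 2}) = int (q * (b + c) - t * c)"
      using tc by simp
    thus ?thesis by simp
  qed
  show "card {y' \<in> V N q. hamming_adj N y y' \<and> g y' = 1} = t * c" if "g y = 2"
  proof -
    have "int (card {y' \<in> V N q. hamming_adj N y y' \<and> g y' = 1}) = int t * int c"
      using c_val[OF y] that by simp
    also have "\<dots> = int (t * c)" by simp
    finally show ?thesis by (simp only: of_nat_eq_iff)
  qed
qed

end


context constr begin

lemma g1_f: assumes "g y = 1" shows "f (sig y) = 1" "hs y mod q < t"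
proof -
  have "f (sig y) = 1 \<and> hs y mod q < t"
  proof (rule ccontr)
    assume "\<not> (f (sig y) = 1 \<and> hs y mod q < t)"
    hence "g y = 2" unfolding g_def by (simp only: if_False)
    thus False using assms by simp
  qed
  thus "f (sig y) = 1" "hs y mod q < t" by auto
qed

lemma lift_exists:
  assumes x: "x \<in> V n q"
  shows "\<exists>y\<in>V N q. sig y = x \<and> hs y = 0"
proof -
  have "\<forall>j. \<exists>w. j < n \<longrightarrow> w \<in> V q q \<and> sB w = x j \<and> tB w = 0"
  proof
    fix j show "\<exists>w. j < n \<longrightarrow> w \<in> V q q \<and> sB w = x j \<and> tB w = 0"
    proof (cases "j < n")
      case True
      have "x j < q" using x True by (simp add: hamming_verts_def)
      thus ?thesis using block_achieve[of "x j" 0] q2 by auto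
    qed simp
  qed
  hence "\<exists>W. \<forall>j. j < n \<longrightarrow> W j \<in> V q q \<and> sB (W j) = x j \<and> tB (W j) = 0" by (rule choice)
  then obtain W where W0: "\<forall>j. j < n \<longrightarrow> W j \<in> V q q \<and> sB (W j) = x j \<and> tB (W j) = 0" by blast
  hence W: "\<And>j. j < n \<Longrightarrow> W j \<in> V q q \<and> sB (W j) = x j \<and> tB (W j) = 0" by blast
  define y where "y = (\<lambda>p. if p < q * n then W (p div q) (p mod q) else 0)"
  have q0': "0 < q" using q2 by simp
  have divlt: "p div q < n" if "p < q * n" for p
    using that q0' by (simp add: div_less_iff_less_mult mult.commute)
  have yV: "y \<in> V N q"
  proof -
    have "y p < q" if "p < N" for p
    proof (cases "p < q * n")
      case True
      have "W (p div q) \<in> V q q" using W divlt[OF True] by blast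
      moreover have "p mod q < q" using q0' by simp
      ultimately show ?thesis using True by (simp add: y_def hamming_verts_def)
    qed (simp add: y_def q0')
    moreover have "y p = 0" if "N \<le> p" for p using that by (simp add: y_def N_def)
    ultimately show ?thesis by (auto simp: hamming_verts_def)
  qed
  have blkW: "blk j y = W j" if j: "j < n" for j
  proof
    fix i show "blk j y i = W j i"
    proof (cases "i < q")
      case True
      have "j * q + i < q * n" using idx_lt[OF j True] .
      moreover have "(j * q + i) div q = j" "(j * q + i) mod q = i" using True by auto
      ultimately show ?thesis using True by (simp add: blk_def y_def)
    next
      case False
      thus ?thesis using W[OF j] by (simp add: blk_def hamming_verts_def)
    qed
  qed
  have sigy: "sig y = x"
  proof
    fix j show "sig y j = x j"
    proof (cases "j < n")
      case True thus ?thesis using blkW W by (simp add: sig_def)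
    next
      case False thus ?thesis using x by (simp add: sig_def hamming_verts_def)
    qed
  qed
  have "zs y = 0" by (simp add: zs_def y_def)
  moreover have "(\<Sum>j\<in>{..<n} - Kc (sig y). tB (blk j y)) = 0"
    using blkW W by (intro sum.neutral) auto
  ultimately have "hs y = 0" by (simp add: hs_def)
  thus ?thesis using yV sigy by blast
qed

lemma g_image: "g ` V N q = {1, 2}"
proof -
  have im: "f ` V n q = {1, 2}" using col by (simp add: is_coloring_def)
  have "1 \<in> f ` V n q" "2 \<in> f ` V n q" using im by simp_all
  then obtain x1 x2 where x1: "x1 \<in> V n q" "f x1 = 1" and x2: "x2 \<in> V n q" "f x2 = 2"
    by (metis imageE)
  obtain y1 where y1: "y1 \<in> V N q" "sig y1 = x1" "hs y1 = 0" using lift_exists[OF x1(1)] by blast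
  obtain y2 where y2: "y2 \<in> V N q" "sig y2 = x2" using lift_exists[OF x2(1)] by blast
  have "g y1 = 1" using y1 x1 t1 q2 by (simp add: g_def)
  moreover have "g y2 = 2" using y2 x2 by (simp add: g_def)
  ultimately have "1 \<in> g ` V N q" "2 \<in> g ` V N q" using y1(1) y2(1) by (force, force)
  moreover have "g ` V N q \<subseteq> {1, 2}" using g12 by auto
  ultimately show ?thesis by auto
qed

lemma g_coloring: "is_coloring N q (q * (b + c) - t * c) (t * c) g"
  unfolding is_coloring_def using g_image g_counts by blast

definition Kp :: "(nat \<Rightarrow> nat) \<Rightarrow> nat set" where
  "Kp y = (\<lambda>(j, i). j * q + i) ` (Kc (sig y) \<times> {..<q})"

definition Gf :: "(nat \<Rightarrow> nat) \<Rightarrow> (nat \<Rightarrow> nat) set" where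
  "Gf y = {y' \<in> V N q. \<forall>p\<in>{..<N} - Kp y. y' p = y p}"

lemma Kp_props:
  assumes y: "y \<in> V N q" "g y = 1"
  shows "Kp y \<subseteq> {..<N}" "card (Kp y) = q * k"
proof -
  have f1: "f (sig y) = 1" using g1_f(1)[OF y(2)] .
  have K: "Kc (sig y) \<subseteq> {..<n}" "card (Kc (sig y)) = k" using Fc_rep[OF sigV f1] by auto
  show "Kp y \<subseteq> {..<N}"
  proof
    fix p assume "p \<in> Kp y"
    then obtain j i where "j \<in> Kc (sig y)" "i < q" "p = j * q + i" by (auto simp: Kp_def)
    thus "p \<in> {..<N}" using idx_lt[of j n i q] K(1) by (auto simp: N_def)
  qed
  have inj: "inj_on (\<lambda>(j, i). j * q + i) (Kc (sig y) \<times> {..<q})"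
    by (rule inj_onI) (auto dest: idx_inj)
  have "card (Kp y) = card (Kc (sig y) \<times> {..<q})" unfolding Kp_def by (rule card_image[OF inj])
  also have "\<dots> = k * q" using K(2) by (simp add: card_cartesian_product)
  finally show "card (Kp y) = q * k" by simp
qed

lemma Gf_key:
  assumes y: "y \<in> V N q" "g y = 1" and y': "y' \<in> Gf y"
  shows "g y' = 1" "Gf y' = Gf y"
proof -
  let ?x = "sig y"
  have f1: "f ?x = 1" using g1_f(1)[OF y(2)] .
  let ?K = "Kc ?x"
  have y'V: "y' \<in> V N q" and agree: "\<And>p. p < N \<Longrightarrow> p \<notin> Kp y \<Longrightarrow> y' p = y p"
    using y' by (auto simp: Gf_def)
  have blk_eq: "blk j y' = blk j y" if "j < n" "j \<notin> ?K" for j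
  proof
    fix i show "blk j y' i = blk j y i"
    proof (cases "i < q")
      case True
      have lt: "j * q + i < N" using idx_lt[OF that(1) True] by (simp add: N_def)
      have "j * q + i \<notin> Kp y"
      proof
        assume "j * q + i \<in> Kp y"
        then obtain j2 i2 where "j2 \<in> ?K" "i2 < q" "j * q + i = j2 * q + i2" by (auto simp: Kp_def)
        thus False using idx_inj[OF True, of i2 j j2] that(2) by auto
      qed
      thus ?thesis using agree lt True by (simp add: blk_def)
    qed (simp add: blk_def)
  qed
  have sig_eq: "\<forall>j\<in>{..<n} - ?K. sig y' j = ?x j" using blk_eq by (simp add: sig_def)
  have inF: "sig y' \<in> Fc ?x" using Fc_rep(1)[OF sigV f1] sigV sig_eq by blast
  have sf: "f (sig y') = 1" "Kc (sig y') = ?K" using same_face[OF sigV f1 inF] by auto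
  have Kp_eq: "Kp y' = Kp y" by (simp add: Kp_def sf(2))
  have zs_eq: "zs y' = zs y"
  proof -
    have "y' (q * n + l) = y (q * n + l)" if "l < m" for l
    proof -
      have "q * n + l < N" using that by (simp add: N_def)
      moreover have "q * n + l \<notin> Kp y"
      proof
        assume "q * n + l \<in> Kp y"
        then obtain j2 i2 where j2: "j2 \<in> ?K" "i2 < q" "q * n + l = j2 * q + i2" by (auto simp: Kp_def)
        have "j2 < n" using j2(1) Fc_rep(2)[OF sigV f1] by blast
        hence "j2 * q + i2 < q * n" using idx_lt j2(2) by blast
        thus False using j2(3) by linarith
      qed
      ultimately show ?thesis using agree by blast
    qed
    thus ?thesis by (simp add: zs_def)
  qed
  have hs_eq: "hs y' = hs y"
    unfolding hs_def sf(2) zs_eq using blk_eq by (intro arg_cong2[where f = "(+)"] sum.cong refl) auto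
  show "g y' = 1" using y(2) sf(1) hs_eq f1 by (simp add: g_def)
  show "Gf y' = Gf y"
    unfolding Gf_def Kp_eq using agree by auto
qed

end


context constr begin

lemma g_good: "good N q (q * (b + c) - t * c) (t * c) (q * k) m g"
proof -
  let ?P = "Gf ` {y \<in> V N q. g y = 1}"
  have faces': "\<forall>F\<in>?P. is_face N q (q * k) F"
  proof
    fix F assume "F \<in> ?P"
    then obtain y where y: "y \<in> V N q" "g y = 1" "F = Gf y" by blast
    show "is_face N q (q * k) F"
      unfolding is_face_def
    proof (intro exI conjI)
      show "Kp y \<subseteq> {..<N}" "card (Kp y) = q * k" using Kp_props[OF y(1,2)] by auto
      show "\<forall>i\<in>{..<N} - Kp y. y i < q" using y(1) by (auto simp: hamming_verts_def)
      show "F = {x \<in> V N q. \<forall>i\<in>{..<N} - Kp y. x i = y i}" using y(3) by (simp add: Gf_def)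
    qed
  qed
  have disj': "\<forall>F\<in>?P. \<forall>G\<in>?P. F \<noteq> G \<longrightarrow> F \<inter> G = {}"
  proof (intro ballI impI)
    fix F G assume F: "F \<in> ?P" and G: "G \<in> ?P" and ne: "F \<noteq> G"
    obtain y1 where y1: "y1 \<in> V N q" "g y1 = 1" "F = Gf y1" using F by blast
    obtain y2 where y2: "y2 \<in> V N q" "g y2 = 1" "G = Gf y2" using G by blast
    show "F \<inter> G = {}"
    proof (rule ccontr)
      assume "F \<inter> G \<noteq> {}"
      then obtain z where z: "z \<in> Gf y1" "z \<in> Gf y2" using y1 y2 by blast
      have "Gf z = Gf y1" using Gf_key(2)[OF y1(1,2) z(1)] .
      moreover have "Gf z = Gf y2" using Gf_key(2)[OF y2(1,2) z(2)] .
      ultimately show False using ne y1 y2 by simp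
    qed
  qed
  have union': "\<Union>?P = {x \<in> V N q. g x = 1}"
  proof
    show "\<Union>?P \<subseteq> {x \<in> V N q. g x = 1}"
    proof
      fix z assume "z \<in> \<Union>?P"
      then obtain y where y: "y \<in> V N q" "g y = 1" "z \<in> Gf y" by blast
      have "z \<in> V N q" using y(3) by (simp add: Gf_def)
      thus "z \<in> {x \<in> V N q. g x = 1}" using Gf_key(1)[OF y] by simp
    qed
    show "{x \<in> V N q. g x = 1} \<subseteq> \<Union>?P"
    proof
      fix y assume y: "y \<in> {x \<in> V N q. g x = 1}"
      hence "y \<in> Gf y" by (simp add: Gf_def)
      thus "y \<in> \<Union>?P" using y by blast
    qed
  qed
  have mi: "int m = int k * (int q - 1) - (int n * (int q - 1) - (int b + int c))"
    using mdef by (simp add: main_eigenvalue_def)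
  have tc: "int (q * (b + c) - t * c) = int q * (int b + int c) - int t * int c"
    using tc_le by (simp add: of_nat_diff)
  have Nd: "int N = int q * int n + int m" by (simp add: N_def)
  have eig: "int m = int (q * k) * (int q - 1) - main_eigenvalue N q (q * (b + c) - t * c) (t * c)"
  proof -
    have "main_eigenvalue N q (q * (b + c) - t * c) (t * c) = int N * (int q - 1) - (int q * (int b + int c))"
      unfolding main_eigenvalue_def tc by simp
    also have "\<dots> = int (q * k) * (int q - 1) - int m" unfolding Nd mi by (simp add: algebra_simps)
    finally show ?thesis by simp
  qed
  show ?thesis unfolding good_def using g_coloring faces' disj' union' eig by blast
qed

end

lemma step:
  assumes code: "perfect_code_1 (q + 1) q C" and q2: "2 \<le> q" and gd: "good n q b c k m f"
    and t: "1 \<le> t" "t \<le> q"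
  shows "\<exists>g. good (q * n + m) q (q * (b + c) - t * c) (t * c) (q * k) m g"
proof -
  have h: "is_coloring n q b c f \<and>
     (\<exists>P. (\<forall>F\<in>P. is_face n q k F) \<and> (\<forall>F\<in>P. \<forall>G\<in>P. F \<noteq> G \<longrightarrow> F \<inter> G = {}) \<and>
          \<Union>P = {x \<in> hamming_verts n q. f x = 1}) \<and>
     int m = int k * (int q - 1) - main_eigenvalue n q b c" using gd by (simp only: good_def)
  have col: "is_coloring n q b c f" using conjunct1[OF h] .
  have md: "int m = int k * (int q - 1) - main_eigenvalue n q b c" using conjunct2[OF conjunct2[OF h]] .
  obtain P where P0: "(\<forall>F\<in>P. is_face n q k F) \<and> (\<forall>F\<in>P. \<forall>G\<in>P. F \<noteq> G \<longrightarrow> F \<inter> G = {}) \<and>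
          \<Union>P = {x \<in> hamming_verts n q. f x = 1}"
    using conjunct1[OF conjunct2[OF h]] by (rule exE)
  have P: "\<forall>F\<in>P. is_face n q k F" "\<forall>F\<in>P. \<forall>G\<in>P. F \<noteq> G \<longrightarrow> F \<inter> G = {}"
      "\<Union>P = {x \<in> hamming_verts n q. f x = 1}"
    using conjunct1[OF P0] conjunct1[OF conjunct2[OF P0]] conjunct2[OF conjunct2[OF P0]] by auto
  interpret constr C q n k b c m t f P
    by unfold_locales (use code q2 col P md t in auto)
  show ?thesis using g_good unfolding N_def by blast
qed

lemma prod_le_pow: "(\<forall>i\<in>{1..r}. t i \<le> (q::nat)) \<Longrightarrow> (\<Prod>i=1..r. t i) \<le> q ^ r"
proof -
  assume a: "\<forall>i\<in>{1..r}. t i \<le> q"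
  have "(\<Prod>i=1..r. t i) \<le> (\<Prod>i=1..r. q)" by (rule prod_mono) (use a in auto)
  thus ?thesis by simp
qed

lemma iter:
  assumes code: "perfect_code_1 (q + 1) q C" and q2: "2 \<le> q" and gd: "good n q b c k m f"
  shows "(\<forall>i\<in>{1..r}. 1 \<le> t i \<and> t i \<le> q) \<Longrightarrow>
    \<exists>g. good (q ^ r * n + m * (\<Sum>i<r. q ^ i)) q (q ^ r * (b + c) - (\<Prod>i=1..r. t i) * c)
          ((\<Prod>i=1..r. t i) * c) (q ^ r * k) m g"
proof (induction r)
  case 0
  show ?case using gd by auto
next
  case (Suc r)
  have tr: "\<forall>i\<in>{1..r}. 1 \<le> t i \<and> t i \<le> q" using Suc.prems by auto
  obtain g where g: "good (q ^ r * n + m * (\<Sum>i<r. q ^ i)) q (q ^ r * (b + c) - (\<Prod>i=1..r. t i) * c)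
          ((\<Prod>i=1..r. t i) * c) (q ^ r * k) m g" using Suc.IH[OF tr] by blast
  let ?T = "\<Prod>i=1..r. t i"
  have ts: "1 \<le> t (Suc r)" "t (Suc r) \<le> q" using Suc.prems by auto
  obtain g' where g': "good (q * (q ^ r * n + m * (\<Sum>i<r. q ^ i)) + m) q
      (q * ((q ^ r * (b + c) - ?T * c) + ?T * c) - t (Suc r) * (?T * c)) (t (Suc r) * (?T * c)) (q * (q ^ r * k)) m g'"
    using step[OF code q2 g ts] by blast
  have Tle: "?T \<le> q ^ r" using prod_le_pow[of r t q] tr by auto
  have Tc: "?T * c \<le> q ^ r * (b + c)"
  proof -
    have "?T * c \<le> q ^ r * c" using Tle by simp
    also have "\<dots> \<le> q ^ r * (b + c)" by simp
    finally show ?thesis .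
  qed
  have e1: "(q ^ r * (b + c) - ?T * c) + ?T * c = q ^ r * (b + c)" using Tc by simp
  have pS: "(\<Prod>i=1..Suc r. t i) = t (Suc r) * ?T" by (simp add: prod.nat_ivl_Suc')
  have e2: "q * (q ^ r * n + m * (\<Sum>i<r. q ^ i)) + m = q ^ Suc r * n + m * (\<Sum>i<Suc r. q ^ i)"
  proof -
    have "(\<Sum>i<Suc r. q ^ i) = 1 + q * (\<Sum>i<r. q ^ i)"
      by (simp only: sum.lessThan_Suc_shift power_0 power_Suc sum_distrib_left)
    thus ?thesis by (simp add: algebra_simps)
  qed
  have e3: "q * (q ^ r * (b + c)) - t (Suc r) * (?T * c) = q ^ Suc r * (b + c) - (\<Prod>i=1..Suc r. t i) * c"
    using pS by (simp add: algebra_simps)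
  have e4: "t (Suc r) * (?T * c) = (\<Prod>i=1..Suc r. t i) * c" using pS by simp
  have e5: "q * (q ^ r * k) = q ^ Suc r * k" by simp
  have e6: "q * (q ^ r * (b + c)) = q ^ Suc r * (b + c)" by simp
  show ?case using g' unfolding e1 e2 e4 e5 e6 by blast
qed


lemma q_ge2: assumes col: "is_coloring n q b c f" shows "2 \<le> q"
proof (rule ccontr)
  assume "\<not> 2 \<le> q"
  hence q1: "q \<le> 1" by simp
  have z: "x = (\<lambda>_. 0)" if "x \<in> hamming_verts n q" for x
  proof
    fix i show "x i = 0"
    proof (cases "i < n")
      case True
      hence "x i < q" using that by (simp add: hamming_verts_def)
      thus ?thesis using q1 by simp
    next
      case False thus ?thesis using that by (simp add: hamming_verts_def)
    qed
  qed
  have im: "f ` hamming_verts n q = {1, 2}" using col by (simp add: is_coloring_def)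
  have "1 \<in> f ` hamming_verts n q" "2 \<in> f ` hamming_verts n q" using im by simp_all
  then obtain x1 x2 where x: "x1 \<in> hamming_verts n q" "f x1 = 1" "x2 \<in> hamming_verts n q" "f x2 = 2"
    by (metis imageE)
  have "x1 = x2" using z[OF x(1)] z[OF x(3)] by simp
  thus False using x by simp
qed

theorem corollary1:
  fixes n q b c k :: nat and f :: "(nat \<Rightarrow> nat) \<Rightarrow> nat" and lam :: int
  assumes code: "\<exists>C. perfect_code_1 (q + 1) q C"
    and col: "is_coloring n q b c f"
    and lamdef: "lam = main_eigenvalue n q b c"
    and part: "\<exists>P. (\<forall>F\<in>P. is_face n q k F) \<and> (\<forall>F\<in>P. \<forall>G\<in>P. F \<noteq> G \<longrightarrow> F \<inter> G = {}) \<and>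
                  \<Union>P = {x \<in> hamming_verts n q. f x = 1}"
    and le: "lam \<le> int k * (int q - 1)"
  shows "\<forall>r::nat. r > 0 \<longrightarrow> (\<forall>t :: nat \<Rightarrow> nat. (\<forall>i\<in>{1..r}. 1 \<le> t i \<and> t i \<le> q) \<longrightarrow>
     (let T = (\<Prod>i=1..r. t i);
          N = nat (int (q ^ r * n) + (int k * (int q - 1) - lam) * ((int q ^ r - 1) div (int q - 1)));
          b' = q ^ r * (b + c) - T * c;
          c' = T * c
      in (\<exists>g. is_coloring N q b' c' g) \<and>
         main_eigenvalue N q b' c' = lam + int k * (int q - 1) * (int q ^ r - 1)))"
proof (intro allI impI)
  fix r :: nat and t :: "nat \<Rightarrow> nat"
  assume r: "r > 0" and tt: "\<forall>i\<in>{1..r}. 1 \<le> t i \<and> t i \<le> q"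
  have q2: "2 \<le> q" by (rule q_ge2[OF col])
  obtain C where C: "perfect_code_1 (q + 1) q C" using code by blast
  define m where "m = nat (int k * (int q - 1) - lam)"
  have mi: "int m = int k * (int q - 1) - lam" using le by (simp add: m_def)
  have gd: "good n q b c k m f" unfolding good_def using col part mi lamdef by blast
  define S where "S = (\<Sum>i<r. q ^ i)"
  define T where "T = (\<Prod>i=1..r. t i)"
  obtain g where g: "good (q ^ r * n + m * S) q (q ^ r * (b + c) - T * c) (T * c) (q ^ r * k) m g"
    using iter[OF C q2 gd tt] unfolding S_def T_def by blast
  have Sd: "(int q ^ r - 1) div (int q - 1) = int S"
  proof -
    have "int q ^ r - 1 = (int q - 1) * (\<Sum>i<r. int q ^ i)" by (rule power_diff_1_eq)
    moreover have "int q - 1 \<noteq> 0" using q2 by simp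
    ultimately have "(int q ^ r - 1) div (int q - 1) = (\<Sum>i<r. int q ^ i)" by simp
    also have "\<dots> = int S" by (simp add: S_def)
    finally show ?thesis .
  qed
  have Neq: "nat (int (q ^ r * n) + (int k * (int q - 1) - lam) * ((int q ^ r - 1) div (int q - 1)))
      = q ^ r * n + m * S"
  proof -
    have "int (q ^ r * n) + (int k * (int q - 1) - lam) * ((int q ^ r - 1) div (int q - 1))
        = int (q ^ r * n + m * S)" unfolding Sd mi[symmetric] by simp
    thus ?thesis by (simp only: nat_int)
  qed
  have col': "is_coloring (q ^ r * n + m * S) q (q ^ r * (b + c) - T * c) (T * c) g"
    using g unfolding good_def by blast
  have eig: "int m = int (q ^ r * k) * (int q - 1) - main_eigenvalue (q ^ r * n + m * S) q (q ^ r * (b + c) - T * c) (T * c)"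
    using g unfolding good_def by blast
  have eig': "main_eigenvalue (q ^ r * n + m * S) q (q ^ r * (b + c) - T * c) (T * c)
      = lam + int k * (int q - 1) * (int q ^ r - 1)"
  proof -
    have "main_eigenvalue (q ^ r * n + m * S) q (q ^ r * (b + c) - T * c) (T * c)
        = int q ^ r * int k * (int q - 1) - int m" using eig by simp
    also have "\<dots> = lam + int k * (int q - 1) * (int q ^ r - 1)" unfolding mi by (simp add: algebra_simps)
    finally show ?thesis .
  qed
  show "let T = (\<Prod>i=1..r. t i);
          N = nat (int (q ^ r * n) + (int k * (int q - 1) - lam) * ((int q ^ r - 1) div (int q - 1)));
          b' = q ^ r * (b + c) - T * c;
          c' = T * c
      in (\<exists>g. is_coloring N q b' c' g) \<and>
         main_eigenvalue N q b' c' = lam + int k * (int q - 1) * (int q ^ r - 1)"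
    unfolding Let_def Neq T_def[symmetric] using col' eig' by blast
qed

end
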